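(* A smooth cubic surface over $\mathbb{Q}$ that does not contain three pairwise disjoint lines defined over $\mathbb{Q}$ cannot contain exactly six lines defined over $\mathbb{Q}$.
   Context: A line on the surface is defined over $\mathbb{Q}$ if it is cut out by linear forms with rational coefficients and is contained in the surface. *)

theory Defs
  imports Complex_Main
begin

text \<open>Points of affine 4-space over the complex numbers (an algebraically closed
field containing the rationals) are modelled as functions nat => complex that
vanish outside the indices 0..3; projective points are the nonzero ones.
A cubic form over Q is given by rational coefficients c i j k (i,j,k < 4):
F(x) = sum_{i,j,k<4} c i j k * x_i x_j x_k.  Every cubic form arises this way.\<close>

definition pt4 :: "(nat \<Rightarrow> complex) \<Rightarrow> bool" where
  "pt4 x \<longleftrightarrow> (\<forall>i\<ge>4. x i = 0)"

definition zero4 :: "nat \<Rightarrow> complex" where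
  "zero4 = (\<lambda>_. 0)"

definition cubic_eval :: "(nat \<Rightarrow> nat \<Rightarrow> nat \<Rightarrow> rat) \<Rightarrow> (nat \<Rightarrow> complex) \<Rightarrow> complex" where
  "cubic_eval c x = (\<Sum>i<4. \<Sum>j<4. \<Sum>k<4. of_rat (c i j k) * x i * x j * x k)"

definition cubic_deriv :: "(nat \<Rightarrow> nat \<Rightarrow> nat \<Rightarrow> rat) \<Rightarrow> nat \<Rightarrow> (nat \<Rightarrow> complex) \<Rightarrow> complex" where
  "cubic_deriv c m x = (\<Sum>i<4. \<Sum>j<4. \<Sum>k<4. of_rat (c i j k) *
      ((if i = m then 1 else 0) * x j * x k + x i * (if j = m then 1 else 0) * x k
       + x i * x j * (if k = m then 1 else 0)))"

text \<open>Smooth: no singular point on the projective surface over the algebraic closure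
(here taken to be C).  This also forces the form to be nonzero.\<close>
definition smooth_cubic :: "(nat \<Rightarrow> nat \<Rightarrow> nat \<Rightarrow> rat) \<Rightarrow> bool" where
  "smooth_cubic c \<longleftrightarrow> (\<forall>x. pt4 x \<and> x \<noteq> zero4 \<longrightarrow>
      \<not> (cubic_eval c x = 0 \<and> (\<forall>m<4. cubic_deriv c m x = 0)))"

definition lin_indep2 :: "(nat \<Rightarrow> rat) \<Rightarrow> (nat \<Rightarrow> rat) \<Rightarrow> bool" where
  "lin_indep2 a b \<longleftrightarrow> (\<forall>s t. (\<forall>i<4. s * a i + t * b i = 0) \<longrightarrow> s = 0 \<and> t = 0)"

text \<open>The (cone over the) line cut out by two rational linear forms.\<close>
definition line_of :: "(nat \<Rightarrow> rat) \<Rightarrow> (nat \<Rightarrow> rat) \<Rightarrow> (nat \<Rightarrow> complex) set" where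
  "line_of a b = {x. pt4 x \<and> (\<Sum>i<4. of_rat (a i) * x i) = 0 \<and> (\<Sum>i<4. of_rat (b i) * x i) = 0}"

definition rat_line :: "(nat \<Rightarrow> complex) set \<Rightarrow> bool" where
  "rat_line L \<longleftrightarrow> (\<exists>a b. lin_indep2 a b \<and> L = line_of a b)"

definition rat_lines_on :: "(nat \<Rightarrow> nat \<Rightarrow> nat \<Rightarrow> rat) \<Rightarrow> (nat \<Rightarrow> complex) set set" where
  "rat_lines_on c = {L. rat_line L \<and> (\<forall>x\<in>L. cubic_eval c x = 0)}"

text \<open>Projective lines are disjoint iff the cones meet only in the origin.\<close>
definition lines_disjoint :: "(nat \<Rightarrow> complex) set \<Rightarrow> (nat \<Rightarrow> complex) set \<Rightarrow> bool" where
  "lines_disjoint L M \<longleftrightarrow> L \<inter> M = {zero4}"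

end

theory Submission
  imports Defs
begin

definition cv :: "(nat \<Rightarrow> rat) \<Rightarrow> nat \<Rightarrow> complex" where
  "cv u = (\<lambda>n. of_rat (u n))"

definition span2 :: "(nat \<Rightarrow> complex) \<Rightarrow> (nat \<Rightarrow> complex) \<Rightarrow> (nat \<Rightarrow> complex) set" where
  "span2 a b = {x. \<exists>s t. x = (\<lambda>n. s * a n + t * b n)}"

definition ind2 :: "(nat \<Rightarrow> complex) \<Rightarrow> (nat \<Rightarrow> complex) \<Rightarrow> bool" where
  "ind2 a b \<longleftrightarrow> (\<forall>s t. (\<forall>n. s * a n + t * b n = 0) \<longrightarrow> s = 0 \<and> t = 0)"

lemma four_cases: "(i::nat) < 4 \<Longrightarrow> i = 0 \<or> i = 1 \<or> i = 2 \<or> i = 3" by arith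

lemma other_two:
  assumes "i < 4" "j < 4" "i \<noteq> (j::nat)"
  shows "\<exists>k l. k < 4 \<and> l < 4 \<and> distinct [i,j,k,l]"
  using assms by simp presburger

lemma set4:
  assumes "i < 4" "j < 4" "k < 4" "l < 4" "distinct [i,j,k,l::nat]"
  shows "{..<4} = {i,j,k,l}"
proof -
  have s: "{i,j,k,l} \<subseteq> {..<(4::nat)}" using assms by auto
  have "card {i,j,k,l} = 4" using assms(5) by auto
  then show ?thesis using s by (intro card_subset_eq[symmetric]) auto
qed

lemma sum4:
  assumes "i < 4" "j < 4" "k < 4" "l < 4" "distinct [i,j,k,l::nat]"
  shows "(\<Sum>n<4. g n) = g i + g j + g k + g l"
  using set4[OF assms] assms(5) by (simp add: algebra_simps)

lemma cramer:
  fixes Ai Aj Ak Al Bi Bj Bk Bl xi xj xk xl d :: complex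
  assumes ea: "Ai*xi+Aj*xj+Ak*xk+Al*xl = 0" and eb: "Bi*xi+Bj*xj+Bk*xk+Bl*xl = 0"
    and d: "d = Ai*Bj - Aj*Bi" "d \<noteq> 0"
  shows "xi = xk*((Aj*Bk - Ak*Bj)/d) + xl*((Aj*Bl-Al*Bj)/d)"
    and "xj = xk*((Ak*Bi - Ai*Bk)/d) + xl*((Al*Bi-Ai*Bl)/d)"
proof -
  have "Bj * (Ai*xi+Aj*xj+Ak*xk+Al*xl) - Aj * (Bi*xi+Bj*xj+Bk*xk+Bl*xl) = 0" using ea eb by simp
  then have "d * xi = (Aj*Bk - Ak*Bj) * xk + (Aj*Bl - Al*Bj)*xl" unfolding d by (simp add: algebra_simps)
  then have "xi = ((Aj*Bk - Ak*Bj) * xk + (Aj*Bl - Al*Bj)*xl) / d" using d(2) by (simp add: eq_divide_eq mult.commute)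
  then show "xi = xk*((Aj*Bk - Ak*Bj)/d) + xl*((Aj*Bl-Al*Bj)/d)" by (simp add: add_divide_distrib mult.commute)
  have "Bi * (Ai*xi+Aj*xj+Ak*xk+Al*xl) - Ai * (Bi*xi+Bj*xj+Bk*xk+Bl*xl) = 0" using ea eb by simp
  then have "d * xj = (Ak*Bi - Ai*Bk) * xk + (Al*Bi - Ai*Bl)*xl" unfolding d by (simp add: algebra_simps)
  then have "xj = ((Ak*Bi - Ai*Bk) * xk + (Al*Bi - Ai*Bl)*xl) / d" using d(2) by (simp add: eq_divide_eq mult.commute)
  then show "xj = xk*((Ak*Bi - Ai*Bk)/d) + xl*((Al*Bi-Ai*Bl)/d)" by (simp add: add_divide_distrib mult.commute)
qed

lemma lin_indep2D:
  assumes "lin_indep2 a b" "\<forall>i<4. s * a i + t * b i = 0"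
  shows "s = 0 \<and> t = 0"
proof -
  have "\<forall>s t. (\<forall>i<4. s * a i + t * b i = 0) \<longrightarrow> s = 0 \<and> t = 0"
    using assms(1) unfolding lin_indep2_def .
  then have "\<forall>t. (\<forall>i<4. s * a i + t * b i = 0) \<longrightarrow> s = 0 \<and> t = 0" by (rule spec)
  then have "(\<forall>i<4. s * a i + t * b i = 0) \<longrightarrow> s = 0 \<and> t = 0" by (rule spec)
  from this assms(2) show ?thesis by (rule mp)
qed

lemma minor_exists:
  assumes "lin_indep2 a b"
  shows "\<exists>i<4. \<exists>j<4. a i * b j - a j * b i \<noteq> 0"
proof (rule ccontr)
  assume "\<not> ?thesis"
  then have z: "\<And>i j. i < 4 \<Longrightarrow> j < 4 \<Longrightarrow> a i * b j - a j * b i = 0" by auto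
  have H: "\<And>s t. (\<forall>i<4. s * a i + t * b i = 0) \<Longrightarrow> s = 0 \<and> t = 0"
    by (rule lin_indep2D[OF assms])
  show False
  proof (cases "\<forall>i<4. a i = 0")
    case True
    then have "\<forall>i<4. 1 * a i + 0 * b i = 0" by simp
    from H[OF this] show False by simp
  next
    case False
    then obtain m where m: "m < 4" "a m \<noteq> 0" by auto
    have "\<forall>i<4. b m * a i + (- a m) * b i = 0"
    proof (intro allI impI)
      fix i assume "i < (4::nat)"
      from z[OF m(1) this] show "b m * a i + (- a m) * b i = 0" by (simp add: algebra_simps)
    qed
    from H[OF this] show False using m by simp
  qed
qed

lemma kernel2:
  assumes "lin_indep2 a b"
  shows "\<exists>u v. (\<forall>i\<ge>4. u i = 0) \<and> (\<forall>i\<ge>4. v i = 0) \<and> ind2 (cv u) (cv v)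
     \<and> line_of a b = span2 (cv u) (cv v)"
proof -
  obtain i j where ij: "i < 4" "j < 4" and D: "a i * b j - a j * b i \<noteq> 0"
    using minor_exists[OF assms] by auto
  then have "i \<noteq> j" by auto
  then obtain k l where kl: "k < 4" "l < 4" "distinct [i,j,k,l]"
    using other_two[OF ij] by blast
  define d where "d = a i * b j - a j * b i"
  define yi where "yi m = (a j * b m - a m * b j) / d" for m
  define yj where "yj m = (a m * b i - a i * b m) / d" for m
  define f where "f m = (\<lambda>n. if n = m then 1 else if n = i then yi m else if n = j then yj m else (0::rat))" for m
  have dnz: "d \<noteq> 0" using D d_def by simp
  have ya: "a i * yi m + a j * yj m + a m = 0" for m
  proof -
    have "a i * yi m + a j * yj m + a m = (a i * (a j * b m - a m * b j) + a j * (a m * b i - a i * b m) + a m * d) / d"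
      unfolding yi_def yj_def using dnz by (simp add: field_simps)
    also have "\<dots> = 0" unfolding d_def by (simp add: algebra_simps)
    finally show ?thesis .
  qed
  have yb: "b i * yi m + b j * yj m + b m = 0" for m
  proof -
    have "b i * yi m + b j * yj m + b m = (b i * (a j * b m - a m * b j) + b j * (a m * b i - a i * b m) + b m * d) / d"
      unfolding yi_def yj_def using dnz by (simp add: field_simps)
    also have "\<dots> = 0" unfolding d_def by (simp add: algebra_simps)
    finally show ?thesis .
  qed
  have sumf: "(\<Sum>n<4. g n * f m n) = g i * yi m + g j * yj m + g m" if "m = k \<or> m = l" for g m
    using that kl ij unfolding sum4[OF ij kl] f_def by auto
  let ?u = "f k" and ?v = "f l"
  have dist: "i\<noteq>j" "i\<noteq>k" "i\<noteq>l" "j\<noteq>k" "j\<noteq>l" "k\<noteq>l" using kl by auto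
  have fk: "f k k = 1" "f k l = 0" "f k i = yi k" "f k j = yj k" unfolding f_def using dist by auto
  have fl: "f l l = 1" "f l k = 0" "f l i = yi l" "f l j = yj l" unfolding f_def using dist by auto
  have fa: "(\<Sum>n<4. of_rat (a n) * cv (f m) n) = 0" if "m = k \<or> m = l" for m
  proof -
    have "(\<Sum>n<4. of_rat (a n) * cv (f m) n) = of_rat (\<Sum>n<4. a n * f m n)"
      by (simp add: cv_def of_rat_sum of_rat_mult)
    also have "\<dots> = 0" using sumf[OF that, of a] ya by simp
    finally show ?thesis .
  qed
  have fb: "(\<Sum>n<4. of_rat (b n) * cv (f m) n) = 0" if "m = k \<or> m = l" for m
  proof -
    have "(\<Sum>n<4. of_rat (b n) * cv (f m) n) = of_rat (\<Sum>n<4. b n * f m n)"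
      by (simp add: cv_def of_rat_sum of_rat_mult)
    also have "\<dots> = 0" using sumf[OF that, of b] yb by simp
    finally show ?thesis .
  qed
  have sup: "\<forall>n\<ge>4. f m n = 0" if "m = k \<or> m = l" for m
    using that kl ij unfolding f_def by auto
  have ind: "ind2 (cv ?u) (cv ?v)"
    unfolding ind2_def
  proof (intro allI impI)
    fix s t assume h: "\<forall>n. s * cv ?u n + t * cv ?v n = 0"
    from h[rule_format, of k] h[rule_format, of l] kl show "s = 0 \<and> t = 0"
      using fk fl by (simp add: cv_def)
  qed
  have eq: "line_of a b = span2 (cv ?u) (cv ?v)"
  proof (intro equalityI subsetI)
    fix x assume "x \<in> line_of a b"
    then have px: "pt4 x" and ea: "(\<Sum>n<4. of_rat (a n) * x n) = 0"
      and eb: "(\<Sum>n<4. of_rat (b n) * x n) = 0" unfolding line_of_def by auto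
    from ea have ea': "of_rat (a i) * x i + of_rat (a j) * x j + of_rat (a k) * x k + of_rat (a l) * x l = 0"
      unfolding sum4[OF ij kl] .
    from eb have eb': "of_rat (b i) * x i + of_rat (b j) * x j + of_rat (b k) * x k + of_rat (b l) * x l = 0"
      unfolding sum4[OF ij kl] .
    have dc: "(of_rat d :: complex) \<noteq> 0" using dnz by simp
    have cr: "x i = x k * ((of_rat (a j) * of_rat (b k) - of_rat (a k) * of_rat (b j)) / of_rat d) + x l * ((of_rat (a j) * of_rat (b l) - of_rat (a l) * of_rat (b j)) / of_rat d)"
        "x j = x k * ((of_rat (a k) * of_rat (b i) - of_rat (a i) * of_rat (b k)) / of_rat d) + x l * ((of_rat (a l) * of_rat (b i) - of_rat (a i) * of_rat (b l)) / of_rat d)"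
      by (rule cramer[OF ea' eb' _ dc]; simp add: d_def of_rat_diff of_rat_mult)+
    have xi: "x i = x k * of_rat (yi k) + x l * of_rat (yi l)"
      using cr(1) unfolding yi_def by (simp add: of_rat_divide of_rat_diff of_rat_mult)
    have xj: "x j = x k * of_rat (yj k) + x l * of_rat (yj l)"
      using cr(2) unfolding yj_def by (simp add: of_rat_divide of_rat_diff of_rat_mult)
    have "x = (\<lambda>n. x k * cv ?u n + x l * cv ?v n)"
    proof
      fix n
      show "x n = x k * cv ?u n + x l * cv ?v n"
      proof (cases "n < 4")
        case True
        then have "n = i \<or> n = j \<or> n = k \<or> n = l" using set4[OF ij kl] by blast
        then show ?thesis
        proof (elim disjE)
          assume "n = i" then show ?thesis using xi fk fl by (simp add: cv_def)
        next
          assume "n = j" then show ?thesis using xj fk fl by (simp add: cv_def)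
        next
          assume "n = k" then show ?thesis using fk fl by (simp add: cv_def)
        next
          assume "n = l" then show ?thesis using fk fl by (simp add: cv_def)
        qed
      next
        case False
        then have "x n = 0" "f k n = 0" "f l n = 0" using px sup[of k] sup[of l] unfolding pt4_def by auto
        then show ?thesis by (simp add: cv_def)
      qed
    qed
    then show "x \<in> span2 (cv ?u) (cv ?v)" unfolding span2_def by blast
  next
    fix x assume "x \<in> span2 (cv ?u) (cv ?v)"
    then obtain s t where x: "x = (\<lambda>n. s * cv ?u n + t * cv ?v n)" unfolding span2_def by blast
    have "pt4 x" unfolding x pt4_def using sup by (simp add: cv_def)
    moreover have "(\<Sum>n<4. of_rat (a n) * x n) = 0"
    proof -
      have "(\<Sum>n<4. of_rat (a n) * x n) = s * (\<Sum>n<4. of_rat (a n) * cv ?u n) + t * (\<Sum>n<4. of_rat (a n) * cv ?v n)"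
        unfolding x by (simp add: sum_distrib_left sum.distrib algebra_simps)
      then show ?thesis using fa by simp
    qed
    moreover have "(\<Sum>n<4. of_rat (b n) * x n) = 0"
    proof -
      have "(\<Sum>n<4. of_rat (b n) * x n) = s * (\<Sum>n<4. of_rat (b n) * cv ?u n) + t * (\<Sum>n<4. of_rat (b n) * cv ?v n)"
        unfolding x by (simp add: sum_distrib_left sum.distrib algebra_simps)
      then show ?thesis using fb by simp
    qed
    ultimately show "x \<in> line_of a b" unfolding line_of_def by blast
  qed
  have s1: "\<forall>n\<ge>4. f k n = 0" and s2: "\<forall>n\<ge>4. f l n = 0" using sup by auto
  show ?thesis
    apply (rule exI[of _ "f k"], rule exI[of _ "f l"])
    using s1 s2 ind eq by simp
qed

definition T3 :: "(nat \<Rightarrow> nat \<Rightarrow> nat \<Rightarrow> rat) \<Rightarrow> (nat \<Rightarrow> complex) \<Rightarrow> (nat \<Rightarrow> complex) \<Rightarrow> (nat \<Rightarrow> complex) \<Rightarrow> complex" where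
  "T3 c x y z = (\<Sum>i<4. \<Sum>j<4. \<Sum>k<4. of_rat (c i j k) * x i * y j * z k)"

definition Dv :: "(nat \<Rightarrow> nat \<Rightarrow> nat \<Rightarrow> rat) \<Rightarrow> (nat \<Rightarrow> complex) \<Rightarrow> (nat \<Rightarrow> complex) \<Rightarrow> complex" where
  "Dv c y x = (\<Sum>m<4. y m * cubic_deriv c m x)"

lemma cubic_eval_T: "cubic_eval c x = T3 c x x x"
  unfolding cubic_eval_def T3_def ..

lemma T3_add1: "T3 c (\<lambda>n. a n + b n) y z = T3 c a y z + T3 c b y z"
  unfolding T3_def by (simp add: algebra_simps sum.distrib)
lemma T3_add2: "T3 c x (\<lambda>n. a n + b n) z = T3 c x a z + T3 c x b z"
  unfolding T3_def by (simp add: algebra_simps sum.distrib)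
lemma T3_add3: "T3 c x y (\<lambda>n. a n + b n) = T3 c x y a + T3 c x y b"
  unfolding T3_def by (simp add: algebra_simps sum.distrib)
lemma T3_smult1: "T3 c (\<lambda>n. s * a n) y z = s * T3 c a y z"
  unfolding T3_def by (simp add: algebra_simps sum_distrib_left)
lemma T3_smult2: "T3 c x (\<lambda>n. s * a n) z = s * T3 c x a z"
  unfolding T3_def by (simp add: algebra_simps sum_distrib_left)
lemma T3_smult3: "T3 c x y (\<lambda>n. s * a n) = s * T3 c x y a"
  unfolding T3_def by (simp add: algebra_simps sum_distrib_left)

lemmas T3_lin = T3_add1 T3_add2 T3_add3 T3_smult1 T3_smult2 T3_smult3

lemma sum4_delta: "(m::nat) < 4 \<Longrightarrow> (\<Sum>n<4. y n * (if m = n then 1 else 0)) = (y m :: complex)"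
proof -
  assume m: "m < 4"
  have "\<And>n. y n * (if m = n then 1 else 0) = (if m = n then y n else 0)" by simp
  then show ?thesis using m by (simp add: sum.delta)
qed

lemma swap4: "(\<Sum>m\<in>A. \<Sum>i\<in>B. \<Sum>j\<in>C. \<Sum>k\<in>D. f m i j k) = (\<Sum>i\<in>B. \<Sum>j\<in>C. \<Sum>k\<in>D. \<Sum>m\<in>A. f m i j k)"
proof -
  have "(\<Sum>m\<in>A. \<Sum>i\<in>B. \<Sum>j\<in>C. \<Sum>k\<in>D. f m i j k) = (\<Sum>i\<in>B. \<Sum>m\<in>A. \<Sum>j\<in>C. \<Sum>k\<in>D. f m i j k)"
    by (rule sum.swap)
  also have "\<dots> = (\<Sum>i\<in>B. \<Sum>j\<in>C. \<Sum>m\<in>A. \<Sum>k\<in>D. f m i j k)"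
    by (intro sum.cong refl) (rule sum.swap)
  also have "\<dots> = (\<Sum>i\<in>B. \<Sum>j\<in>C. \<Sum>k\<in>D. \<Sum>m\<in>A. f m i j k)"
    by (intro sum.cong refl) (rule sum.swap)
  finally show ?thesis .
qed

lemma Dv_T: "Dv c y x = T3 c y x x + T3 c x y x + T3 c x x y"
proof -
  define X where "X m i j k = of_rat (c i j k) *
      ((if i = m then 1 else 0) * x j * x k + x i * (if j = m then 1 else 0) * x k
       + x i * x j * (if k = m then (1::complex) else 0))" for m i j k
  have "Dv c y x = (\<Sum>m<4. y m * (\<Sum>i<4. \<Sum>j<4. \<Sum>k<4. X m i j k))"
    unfolding Dv_def cubic_deriv_def X_def ..
  also have "\<dots> = (\<Sum>m<4. \<Sum>i<4. \<Sum>j<4. \<Sum>k<4. y m * X m i j k)"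
    by (simp only: sum_distrib_left)
  also have "\<dots> = (\<Sum>i<4. \<Sum>j<4. \<Sum>k<4. \<Sum>m<4. y m * X m i j k)"
    by (rule swap4)
  also have "\<dots> = (\<Sum>i<4. \<Sum>j<4. \<Sum>k<4. of_rat (c i j k) * y i * x j * x k
      + of_rat (c i j k) * x i * y j * x k + of_rat (c i j k) * x i * x j * y k)"
  proof (intro sum.cong refl)
    fix i j k assume "i \<in> {..<4::nat}" "j \<in> {..<4::nat}" "k \<in> {..<4::nat}"
    then have ijk: "i < 4" "j < 4" "k < 4" by auto
    have "(\<Sum>m<4. y m * X m i j k)
      = of_rat (c i j k) * x j * x k * (\<Sum>m<4. y m * (if i = m then 1 else 0))
       + of_rat (c i j k) * x i * x k * (\<Sum>m<4. y m * (if j = m then 1 else 0))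
       + of_rat (c i j k) * x i * x j * (\<Sum>m<4. y m * (if k = m then 1 else 0))"
      unfolding X_def by (simp add: sum_distrib_left sum.distrib algebra_simps)
    also have "\<dots> = of_rat (c i j k) * y i * x j * x k
      + of_rat (c i j k) * x i * y j * x k + of_rat (c i j k) * x i * x j * y k"
      using ijk by (simp add: sum4_delta algebra_simps)
    finally show "(\<Sum>m<4. y m * X m i j k) = of_rat (c i j k) * y i * x j * x k
      + of_rat (c i j k) * x i * y j * x k + of_rat (c i j k) * x i * x j * y k" .
  qed
  also have "\<dots> = T3 c y x x + T3 c x y x + T3 c x x y"
    unfolding T3_def by (simp only: sum.distrib)
  finally show ?thesis .
qed

lemma Dv_lin: "Dv c (\<lambda>n. a n + b n) x = Dv c a x + Dv c b x"
  "Dv c (\<lambda>n. s * a n) x = s * Dv c a x"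
  unfolding Dv_def by (simp_all add: algebra_simps sum.distrib sum_distrib_left)

lemma Dv_unit: "m < 4 \<Longrightarrow> Dv c (\<lambda>n. if n = m then 1 else 0) x = cubic_deriv c m x"
proof -
  assume m: "m < 4"
  have "\<And>n. (if n = m then 1 else 0) * cubic_deriv c n x = (if m = n then cubic_deriv c n x else 0)" by simp
  then show ?thesis unfolding Dv_def using m by (simp add: sum.delta)
qed

lemma bincubic:
  fixes A B C D :: complex
  assumes "\<And>s t. A*s^3 + B*s^2*t + C*s*t^2 + D*t^3 = 0"
  shows "A = 0" "B = 0" "C = 0" "D = 0"
proof -
  have 1: "A = 0" using assms[of 1 0] by simp
  have 2: "D = 0" using assms[of 0 1] by simp
  have 3: "B + C = 0" using assms[of 1 1] 1 2 by simp
  have 4: "C - B = 0" using assms[of 1 "-1"] 1 2 by simp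
  show "A = 0" "B = 0" "C = 0" "D = 0" using 1 2 3 4 by auto
qed

lemma expand2:
  "cubic_eval c (\<lambda>n. s * a n + t * b n) = T3 c a a a * s^3
     + (T3 c a a b + T3 c a b a + T3 c b a a) * s^2 * t
     + (T3 c a b b + T3 c b a b + T3 c b b a) * s * t^2 + T3 c b b b * t^3"
  unfolding cubic_eval_T by (simp add: T3_lin algebra_simps power2_eq_square power3_eq_cube)

lemma line_on_surface:
  assumes "\<And>s t. cubic_eval c (\<lambda>n. s * a n + t * b n) = 0"
  shows "T3 c a a a = 0" "T3 c a a b + T3 c a b a + T3 c b a a = 0"
    "T3 c a b b + T3 c b a b + T3 c b b a = 0" "T3 c b b b = 0"
  using bincubic[of "T3 c a a a" "T3 c a a b + T3 c a b a + T3 c b a a"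
      "T3 c a b b + T3 c b a b + T3 c b b a" "T3 c b b b"] assms
  unfolding expand2 by (auto simp: algebra_simps)

lemma steinitz:
  fixes w v :: "nat \<Rightarrow> nat \<Rightarrow> complex"
  assumes "finite J" "finite I" "card J < card I"
    and "\<forall>i\<in>I. \<exists>a. \<forall>n. w i n = (\<Sum>j\<in>J. a j * v j n)"
  shows "\<exists>c. (\<exists>i\<in>I. c i \<noteq> 0) \<and> (\<forall>n. (\<Sum>i\<in>I. c i * w i n) = 0)"
  using assms
proof (induction J arbitrary: I w rule: finite_induct)
  case empty
  then obtain i0 where i0: "i0 \<in> I" by (metis card.empty card_gt_0_iff ex_in_conv)
  have wz: "w i n = 0" if "i \<in> I" for i n using empty.prems(3) that by auto
  let ?c = "\<lambda>i. if i = i0 then (1::complex) else 0"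
  have "\<forall>n. (\<Sum>i\<in>I. ?c i * w i n) = 0"
  proof
    fix n
    have "(\<Sum>i\<in>I. ?c i * w i n) = (\<Sum>i\<in>I. 0)" using wz by (intro sum.cong) auto
    then show "(\<Sum>i\<in>I. ?c i * w i n) = 0" by simp
  qed
  moreover have "?c i0 \<noteq> 0" by simp
  ultimately show ?case using i0 by (intro exI[of _ ?c]) blast
next
  case (insert j0 J)
  from insert.prems(3) have "\<forall>i\<in>I. \<exists>a. \<forall>n. w i n = (\<Sum>j\<in>insert j0 J. a j * v j n)" .
  then obtain a where a: "\<And>i n. i \<in> I \<Longrightarrow> w i n = (\<Sum>j\<in>insert j0 J. a i j * v j n)"
    by metis
  have a': "w i n = a i j0 * v j0 n + (\<Sum>j\<in>J. a i j * v j n)" if "i \<in> I" for i n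
    using a[OF that] insert.hyps by simp
  have cardJ: "card (insert j0 J) = Suc (card J)" using insert.hyps by simp
  show ?case
  proof (cases "\<forall>i\<in>I. a i j0 = 0")
    case True
    have "\<forall>i\<in>I. \<exists>b. \<forall>n. w i n = (\<Sum>j\<in>J. b j * v j n)"
    proof
      fix i assume "i \<in> I"
      then have "\<forall>n. w i n = (\<Sum>j\<in>J. a i j * v j n)" using a' True by simp
      then show "\<exists>b. \<forall>n. w i n = (\<Sum>j\<in>J. b j * v j n)" by (intro exI[of _ "a i"])
    qed
    then show ?thesis using insert.IH[of I w] insert.prems cardJ by simp
  next
    case False
    then obtain r where r: "r \<in> I" "a r j0 \<noteq> 0" by blast
    define I' where "I' = I - {r}"
    define w' where "w' i n = w i n - (a i j0 / a r j0) * w r n" for i n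
    have fI': "finite I'" using insert.prems(1) I'_def by simp
    have cI': "card J < card I'" using insert.prems(2) cardJ r(1) unfolding I'_def
      by (simp add: card_Diff_singleton)
    have "\<forall>i\<in>I'. \<exists>b. \<forall>n. w' i n = (\<Sum>j\<in>J. b j * v j n)"
    proof
      fix i assume i: "i \<in> I'"
      then have iI: "i \<in> I" unfolding I'_def by simp
      have "\<forall>n. w' i n = (\<Sum>j\<in>J. (a i j - a i j0 / a r j0 * a r j) * v j n)"
      proof
        fix n
        have "w' i n = (a i j0 * v j0 n + (\<Sum>j\<in>J. a i j * v j n))
             - (a i j0 / a r j0) * (a r j0 * v j0 n + (\<Sum>j\<in>J. a r j * v j n))"
          unfolding w'_def using a'[OF iI] a'[OF r(1)] by simp
        also have "\<dots> = (\<Sum>j\<in>J. a i j * v j n) - (a i j0 / a r j0) * (\<Sum>j\<in>J. a r j * v j n)"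
          using r(2) by (simp add: field_simps)
        also have "\<dots> = (\<Sum>j\<in>J. (a i j - a i j0 / a r j0 * a r j) * v j n)"
          by (simp add: sum_distrib_left sum_subtractf algebra_simps)
        finally show "w' i n = (\<Sum>j\<in>J. (a i j - a i j0 / a r j0 * a r j) * v j n)" .
      qed
      then show "\<exists>b. \<forall>n. w' i n = (\<Sum>j\<in>J. b j * v j n)" by (intro exI[of _ "\<lambda>j. a i j - a i j0 / a r j0 * a r j"])
    qed
    then obtain c' where c': "\<exists>i\<in>I'. c' i \<noteq> 0" "\<forall>n. (\<Sum>i\<in>I'. c' i * w' i n) = 0"
      using insert.IH[OF fI' cI'] by blast
    define c where "c i = (if i = r then - (\<Sum>k\<in>I'. c' k * (a k j0 / a r j0)) else c' i)" for i
    have "\<forall>n. (\<Sum>i\<in>I. c i * w i n) = 0"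
    proof
      fix n
      have Ieq: "I = insert r I'" using r(1) I'_def by auto
      have rI': "r \<notin> I'" using I'_def by simp
      have "(\<Sum>i\<in>I. c i * w i n) = c r * w r n + (\<Sum>i\<in>I'. c i * w i n)"
        unfolding Ieq using fI' rI' by simp
      also have "(\<Sum>i\<in>I'. c i * w i n) = (\<Sum>i\<in>I'. c' i * w i n)"
        unfolding c_def using rI' by (intro sum.cong) auto
      also have "(\<Sum>i\<in>I'. c' i * w i n) = (\<Sum>i\<in>I'. c' i * w' i n) + (\<Sum>k\<in>I'. c' k * (a k j0 / a r j0)) * w r n"
        unfolding w'_def by (simp add: sum_distrib_left sum_distrib_right sum.distrib[symmetric] algebra_simps)
      finally show "(\<Sum>i\<in>I. c i * w i n) = 0" using c'(2) unfolding c_def by simp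
    qed
    moreover have "\<exists>i\<in>I. c i \<noteq> 0"
    proof -
      from c'(1) obtain i where "i \<in> I'" "c' i \<noteq> 0" by blast
      then show ?thesis unfolding c_def I'_def by (intro bexI[of _ i]) auto
    qed
    ultimately show ?thesis by blast
  qed
qed

definition ind3 :: "(nat \<Rightarrow> complex) \<Rightarrow> (nat \<Rightarrow> complex) \<Rightarrow> (nat \<Rightarrow> complex) \<Rightarrow> bool" where
  "ind3 p u w \<longleftrightarrow> (\<forall>a b c. (\<forall>n. a * p n + b * u n + c * w n = 0) \<longrightarrow> a = 0 \<and> b = 0 \<and> c = 0)"

definition span3 :: "(nat \<Rightarrow> complex) \<Rightarrow> (nat \<Rightarrow> complex) \<Rightarrow> (nat \<Rightarrow> complex) \<Rightarrow> (nat \<Rightarrow> complex) set" where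
  "span3 p u w = {x. \<exists>a b c. x = (\<lambda>n. a * p n + b * u n + c * w n)}"

definition ev :: "nat \<Rightarrow> nat \<Rightarrow> complex" where
  "ev m = (\<lambda>n. if n = m then 1 else 0)"

lemma ind3D: "ind3 p u w \<Longrightarrow> (\<And>n. a * p n + b * u n + c * w n = 0) \<Longrightarrow> a = 0 \<and> b = 0 \<and> c = 0"
  unfolding ind3_def by blast

lemma ind2D: "ind2 p u \<Longrightarrow> (\<And>n. a * p n + b * u n = 0) \<Longrightarrow> a = 0 \<and> b = 0"
  unfolding ind2_def by blast

lemma pt4_span_ev: "pt4 y \<Longrightarrow> y n = (\<Sum>j\<in>{..<4}. y j * ev j n)"
  unfolding ev_def pt4_def
proof -
  assume h: "\<forall>i\<ge>4. y i = 0"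
  have "\<And>j. y j * (if n = j then 1 else 0) = (if n = j then y j else 0)" by simp
  then have "(\<Sum>j\<in>{..<4}. y j * (if n = j then 1 else 0)) = (if n < 4 then y n else 0)"
    by (simp add: sum.delta)
  then show "y n = (\<Sum>j\<in>{..<4}. y j * (if n = j then 1 else 0))" using h by auto
qed

lemma sum5: "(\<Sum>i<(5::nat). f i) = f 0 + f 1 + f 2 + f 3 + (f 4 :: complex)"
  by (simp add: eval_nat_numeral)
lemma sum3: "(\<Sum>i<(3::nat). f i) = f 0 + f 1 + (f 2 :: complex)"
  by (simp add: eval_nat_numeral)

lemma five_dep:
  assumes "pt4 a" "pt4 b" "pt4 c" "pt4 d" "pt4 e"
  shows "\<exists>k0 k1 k2 k3 k4. (k0 \<noteq> 0 \<or> k1 \<noteq> 0 \<or> k2 \<noteq> 0 \<or> k3 \<noteq> 0 \<or> k4 \<noteq> 0) \<and>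
      (\<forall>n. k0 * a n + k1 * b n + k2 * c n + k3 * d n + k4 * e n = 0)"
proof -
  define W where "W i = (if i = 0 then a else if i = 1 then b else if i = 2 then c else if i = 3 then d else e)" for i :: nat
  have "\<forall>i\<in>{..<5}. \<exists>f. \<forall>n. W i n = (\<Sum>j\<in>{..<4}. f j * ev j n)"
  proof
    fix i assume "i \<in> {..<5::nat}"
    have "pt4 (W i)" unfolding W_def using assms by auto
    then show "\<exists>f. \<forall>n. W i n = (\<Sum>j\<in>{..<4}. f j * ev j n)"
      using pt4_span_ev by blast
  qed
  then obtain k where k: "\<exists>i\<in>{..<5}. k i \<noteq> 0" "\<forall>n. (\<Sum>i\<in>{..<5}. k i * W i n) = 0"
    using steinitz[of "{..<4}" "{..<5}" W ev] by auto
  have "k 0 \<noteq> 0 \<or> k 1 \<noteq> 0 \<or> k 2 \<noteq> 0 \<or> k 3 \<noteq> 0 \<or> k 4 \<noteq> 0"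
  proof -
    from k(1) obtain i where "i < 5" "k i \<noteq> 0" by auto
    then show ?thesis by (cases i) (auto simp: eval_nat_numeral less_Suc_eq)
  qed
  moreover have "\<forall>n. k 0 * a n + k 1 * b n + k 2 * c n + k 3 * d n + k 4 * e n = 0"
    using k(2) unfolding sum5 W_def by simp
  ultimately show ?thesis by blast
qed

lemma complete4:
  assumes "ind3 p u w" "pt4 p" "pt4 u" "pt4 w"
  shows "\<exists>e. pt4 e \<and> (\<forall>y. pt4 y \<longrightarrow> (\<exists>a b c d. \<forall>n. y n = a * p n + b * u n + c * w n + d * e n))"
proof -
  have "\<exists>m<4. ev m \<notin> span3 p u w"
  proof (rule ccontr)
    assume "\<not> ?thesis"
    then have h: "\<forall>m<4. \<exists>a b c. ev m = (\<lambda>n. a * p n + b * u n + c * w n)"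
      unfolding span3_def by auto
    define V where "V j = (if j = 0 then p else if j = 1 then u else w)" for j :: nat
    have "\<forall>i\<in>{..<4}. \<exists>f. \<forall>n. ev i n = (\<Sum>j\<in>{..<3}. f j * V j n)"
    proof
      fix i assume "i \<in> {..<4::nat}"
      then obtain a b c where "ev i = (\<lambda>n. a * p n + b * u n + c * w n)" using h by auto
      then have "\<forall>n. ev i n = (\<Sum>j\<in>{..<3}. (if j = 0 then a else if j = 1 then b else c) * V j n)"
        unfolding sum3 V_def by simp
      then show "\<exists>f. \<forall>n. ev i n = (\<Sum>j\<in>{..<3}. f j * V j n)"
        by (intro exI[of _ "\<lambda>j. if j = 0 then a else if j = 1 then b else c"])
    qed
    then obtain k where k: "\<exists>i\<in>{..<4}. k i \<noteq> 0" "\<forall>n. (\<Sum>i\<in>{..<4}. k i * ev i n) = 0"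
      using steinitz[of "{..<3}" "{..<4}" ev V] by auto
    from k(1) obtain i where i: "i < 4" "k i \<noteq> 0" by auto
    have "\<And>j. k j * ev j i = (if i = j then k j else 0)" unfolding ev_def by simp
    then have "(\<Sum>j\<in>{..<4}. k j * ev j i) = k i" using i(1) by (simp add: sum.delta)
    then show False using k(2) i by simp
  qed
  then obtain m where m: "m < 4" "ev m \<notin> span3 p u w" by auto
  have pe: "pt4 (ev m)" using m(1) unfolding pt4_def ev_def by auto
  have "\<forall>y. pt4 y \<longrightarrow> (\<exists>a b c d. \<forall>n. y n = a * p n + b * u n + c * w n + d * ev m n)"
  proof (intro allI impI)
    fix y assume y: "pt4 y"
    obtain k0 k1 k2 k3 k4 where k: "k0 \<noteq> 0 \<or> k1 \<noteq> 0 \<or> k2 \<noteq> 0 \<or> k3 \<noteq> 0 \<or> k4 \<noteq> 0"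
      "\<forall>n. k0 * p n + k1 * u n + k2 * w n + k3 * ev m n + k4 * y n = 0"
      using five_dep[OF assms(2-4) pe y] by blast
    have k4: "k4 \<noteq> 0"
    proof
      assume z: "k4 = 0"
      show False
      proof (cases "k3 = 0")
        case True
        then have "k0 = 0 \<and> k1 = 0 \<and> k2 = 0" using k(2) z by (intro ind3D[OF assms(1)]) simp
        then show False using k(1) z True by simp
      next
        case False
        have "ev m = (\<lambda>n. (- k0 / k3) * p n + (- k1 / k3) * u n + (- k2 / k3) * w n)"
        proof
          fix n
          have "k3 * ev m n = - (k0 * p n + k1 * u n + k2 * w n)" unfolding eq_neg_iff_add_eq_0
            using k(2)[rule_format, of n] z by (simp add: algebra_simps)
          then have "ev m n = - (k0 * p n + k1 * u n + k2 * w n) / k3"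
            using False by (simp add: eq_divide_eq mult.commute)
          also have "\<dots> = (- k0 / k3) * p n + (- k1 / k3) * u n + (- k2 / k3) * w n"
            by (simp add: add_divide_distrib diff_divide_distrib)
          finally show "ev m n = (- k0 / k3) * p n + (- k1 / k3) * u n + (- k2 / k3) * w n" .
        qed
        then show False using m(2) unfolding span3_def by blast
      qed
    qed
    have "\<forall>n. y n = (- k0 / k4) * p n + (- k1 / k4) * u n + (- k2 / k4) * w n + (- k3 / k4) * ev m n"
    proof
      fix n
      have "k4 * y n = - (k0 * p n + k1 * u n + k2 * w n + k3 * ev m n)" unfolding eq_neg_iff_add_eq_0
        using k(2)[rule_format, of n] by (simp add: algebra_simps)
      then have "y n = - (k0 * p n + k1 * u n + k2 * w n + k3 * ev m n) / k4"
        using k4 by (simp add: eq_divide_eq mult.commute)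
      also have "\<dots> = (- k0 / k4) * p n + (- k1 / k4) * u n + (- k2 / k4) * w n + (- k3 / k4) * ev m n"
        by (simp add: add_divide_distrib diff_divide_distrib)
      finally show "y n = (- k0 / k4) * p n + (- k1 / k4) * u n + (- k2 / k4) * w n + (- k3 / k4) * ev m n" .
    qed
    then show "\<exists>a b c d. \<forall>n. y n = a * p n + b * u n + c * w n + d * ev m n" by blast
  qed
  then show ?thesis using pe by blast
qed

lemma singular_contra:
  assumes "smooth_cubic c" "pt4 x" "x \<noteq> zero4" "cubic_eval c x = 0"
    and span: "\<forall>y. pt4 y \<longrightarrow> (\<exists>a b c d. \<forall>n. y n = a * p n + b * u n + c * w n + d * e n)"
    and "Dv c p x = 0" "Dv c u x = 0" "Dv c w x = 0" "Dv c e x = 0"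
  shows False
proof -
  have "\<forall>m<4. cubic_deriv c m x = 0"
  proof (intro allI impI)
    fix m :: nat assume m: "m < 4"
    have "pt4 (ev m)" using m unfolding pt4_def ev_def by auto
    then obtain a1 b1 c1 d1 where h: "\<forall>n. ev m n = a1 * p n + b1 * u n + c1 * w n + d1 * e n"
      using span by blast
    then have "ev m = (\<lambda>n. a1 * p n + b1 * u n + c1 * w n + d1 * e n)" by auto
    then have "Dv c (ev m) x = a1 * Dv c p x + b1 * Dv c u x + c1 * Dv c w x + d1 * Dv c e x"
      by (simp add: Dv_lin)
    then have "Dv c (ev m) x = 0" using assms by simp
    then show "cubic_deriv c m x = 0" using Dv_unit[OF m] unfolding ev_def by simp
  qed
  then show False using assms(1-4) unfolding smooth_cubic_def by blast
qed

definition lam where "lam c p u w = T3 c p u w + T3 c p w u + T3 c u p w + T3 c u w p + T3 c w p u + T3 c w u p"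
definition mu where "mu c p u w = T3 c u u w + T3 c u w u + T3 c w u u"

definition plane_ok where "plane_ok c p u w \<longleftrightarrow> pt4 p \<and> pt4 u \<and> pt4 w \<and> ind3 p u w \<and>
   (\<forall>s t. cubic_eval c (\<lambda>n. s * p n + t * u n) = 0) \<and> (\<forall>s t. cubic_eval c (\<lambda>n. s * p n + t * w n) = 0)"

lemma plane_rels:
  assumes "plane_ok c p u w"
  shows "T3 c p p p = 0" "T3 c u p p = - T3 c p p u - T3 c p u p"
    "T3 c u u p = - T3 c p u u - T3 c u p u" "T3 c u u u = 0"
    "T3 c w p p = - T3 c p p w - T3 c p w p"
    "T3 c w w p = - T3 c p w w - T3 c w p w" "T3 c w w w = 0"
proof -
  have h1: "\<And>s t. cubic_eval c (\<lambda>n. s * p n + t * u n) = 0"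
   and h2: "\<And>s t. cubic_eval c (\<lambda>n. s * p n + t * w n) = 0"
    using assms unfolding plane_ok_def by auto
  note a = line_on_surface[OF h1] and b = line_on_surface[OF h2]
  show "T3 c p p p = 0" "T3 c u u u = 0" "T3 c w w w = 0" using a b by auto
  show "T3 c u p p = - T3 c p p u - T3 c p u p" using a(2) by (simp add: algebra_simps eq_neg_iff_add_eq_0)
  show "T3 c u u p = - T3 c p u u - T3 c u p u" using a(3) by (simp add: algebra_simps eq_neg_iff_add_eq_0)
  show "T3 c w p p = - T3 c p p w - T3 c p w p" using b(2) by (simp add: algebra_simps eq_neg_iff_add_eq_0)
  show "T3 c w w p = - T3 c p w w - T3 c w p w" using b(3) by (simp add: algebra_simps eq_neg_iff_add_eq_0)
qed

lemma expand3:
  assumes "plane_ok c p u w"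
  shows "cubic_eval c (\<lambda>n. a * p n + b * u n + g * w n) = b * g * (lam c p u w * a + mu c p u w * b + mu c p w u * g)"
  unfolding cubic_eval_T lam_def mu_def
  by (simp add: T3_lin plane_rels[OF assms] algebra_simps power2_eq_square power3_eq_cube)

lemma Dv3:
  assumes "plane_ok c p u w"
  shows "Dv c p (\<lambda>n. a * p n + b * u n + g * w n) = b * g * lam c p u w"
    "Dv c u (\<lambda>n. a * p n + b * u n + g * w n) = g * (lam c p u w * a + 2 * mu c p u w * b + mu c p w u * g)"
    "Dv c w (\<lambda>n. a * p n + b * u n + g * w n) = b * (lam c p u w * a + mu c p u w * b + 2 * mu c p w u * g)"
  unfolding Dv_T lam_def mu_def
  by (simp_all add: T3_lin plane_rels[OF assms] algebra_simps)

lemma quad_root: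
  fixes A B C :: complex
  shows "\<exists>s t. (s \<noteq> 0 \<or> t \<noteq> 0) \<and> A * s^2 + B * s * t + C * t^2 = 0"
proof (cases "A = 0")
  case True
  then show ?thesis by (intro exI[of _ 1] exI[of _ 0]) simp
next
  case False
  define r where "r = csqrt (B^2 - 4 * A * C)"
  have r2: "r^2 = B^2 - 4 * A * C" unfolding r_def by simp
  define s where "s = (- B + r) / (2 * A)"
  have "4 * A * (A * s^2 + B * s + C) = (- B + r)^2 + 2 * B * (- B + r) + 4 * A * C"
    unfolding s_def using False by (simp add: field_simps power2_eq_square)
  also have "\<dots> = r^2 - B^2 + 4 * A * C" by (simp add: algebra_simps power2_eq_square)
  also have "\<dots> = 0" using r2 by simp
  finally have "A * s^2 + B * s + C = 0" using False by simp
  then show ?thesis by (intro exI[of _ s] exI[of _ 1]) simp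
qed

lemma Dv_e_quad:
  "Dv c e (\<lambda>n. s * p n + t * u n) = (T3 c e p p + T3 c p e p + T3 c p p e) * s^2
    + (T3 c e p u + T3 c e u p + T3 c p e u + T3 c u e p + T3 c p u e + T3 c u p e) * s * t
    + (T3 c e u u + T3 c u e u + T3 c u u e) * t^2"
  unfolding Dv_T by (simp add: T3_lin algebra_simps power2_eq_square)

lemma no_double:
  assumes sm: "smooth_cubic c" and ok: "plane_ok c p u w"
  shows "lam c p u w \<noteq> 0 \<or> mu c p u w \<noteq> 0"
proof (rule ccontr)
  assume "\<not> ?thesis"
  then have z: "lam c p u w = 0" "mu c p u w = 0" by auto
  have pp: "pt4 p" "pt4 u" "pt4 w" "ind3 p u w" and on: "\<And>s t. cubic_eval c (\<lambda>n. s * p n + t * u n) = 0"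
    using ok unfolding plane_ok_def by auto
  obtain e where e: "pt4 e" "\<forall>y. pt4 y \<longrightarrow> (\<exists>a b c d. \<forall>n. y n = a * p n + b * u n + c * w n + d * e n)"
    using complete4[OF pp(4) pp(1-3)] by blast
  obtain s t where st: "s \<noteq> 0 \<or> t \<noteq> 0"
    and q: "(T3 c e p p + T3 c p e p + T3 c p p e) * s^2
    + (T3 c e p u + T3 c e u p + T3 c p e u + T3 c u e p + T3 c p u e + T3 c u p e) * s * t
    + (T3 c e u u + T3 c u e u + T3 c u u e) * t^2 = 0"
    using quad_root by blast
  define x where "x = (\<lambda>n. s * p n + t * u n)"
  have x3: "x = (\<lambda>n. s * p n + t * u n + 0 * w n)" unfolding x_def by simp
  have "pt4 x" using pp unfolding x_def pt4_def by simp
  moreover have "x \<noteq> zero4"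
  proof
    assume "x = zero4"
    then have "\<And>n. s * p n + t * u n + 0 * w n = 0" unfolding x_def zero4_def by (simp add: fun_eq_iff)
    then have "s = 0 \<and> t = 0 \<and> (0::complex) = 0" by (rule ind3D[OF pp(4)])
    then show False using st by simp
  qed
  moreover have "cubic_eval c x = 0" unfolding x_def by (rule on)
  moreover have "Dv c p x = 0" "Dv c u x = 0" "Dv c w x = 0"
    unfolding x3 Dv3[OF ok] using z by simp_all
  moreover have "Dv c e x = 0" unfolding x_def Dv_e_quad using q .
  ultimately show False using singular_contra[OF sm _ _ _ e(2)] by blast
qed

definition supp4 :: "(nat \<Rightarrow> rat) \<Rightarrow> bool" where "supp4 u \<longleftrightarrow> (\<forall>i\<ge>4. u i = 0)"

lemma pt4_cv: "supp4 u \<Longrightarrow> pt4 (cv u)" unfolding supp4_def pt4_def cv_def by simp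

lemma span2_mem: "(\<lambda>n. s * a n + t * b n) \<in> span2 a b" unfolding span2_def by blast

lemma span2_pt4: "pt4 a \<Longrightarrow> pt4 b \<Longrightarrow> x \<in> span2 a b \<Longrightarrow> pt4 x"
  unfolding span2_def pt4_def by auto

lemma span2_comb:
  assumes "x \<in> span2 a b" "y \<in> span2 a b"
  shows "(\<lambda>n. s * x n + t * y n) \<in> span2 a b"
proof -
  obtain s1 t1 where x: "x = (\<lambda>n. s1 * a n + t1 * b n)" using assms(1) unfolding span2_def by blast
  obtain s2 t2 where y: "y = (\<lambda>n. s2 * a n + t2 * b n)" using assms(2) unfolding span2_def by blast
  have "(\<lambda>n. s * x n + t * y n) = (\<lambda>n. (s * s1 + t * s2) * a n + (s * t1 + t * t2) * b n)"
    unfolding x y by (simp add: algebra_simps)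
  then show ?thesis unfolding span2_def by blast
qed

lemma span2_smult: "x \<in> span2 a b \<Longrightarrow> (\<lambda>n. s * x n) \<in> span2 a b"
  using span2_comb[of x a b x s 0] by simp

lemma span2_sub: "span2 x y \<subseteq> span2 a b" if "x \<in> span2 a b" "y \<in> span2 a b"
proof
  fix z assume "z \<in> span2 x y"
  then obtain s t where "z = (\<lambda>n. s * x n + t * y n)" unfolding span2_def by blast
  then show "z \<in> span2 a b" using span2_comb[OF that] by simp
qed

lemma exchange:
  assumes ab: "ind2 a b" and x: "x \<in> span2 a b" and y: "y \<in> span2 a b" and xy: "ind2 x y"
  shows "span2 x y = span2 a b"
proof
  show "span2 x y \<subseteq> span2 a b" using span2_sub[OF x y] .
  obtain s1 t1 where xe: "x = (\<lambda>n. s1 * a n + t1 * b n)" using x unfolding span2_def by blast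
  obtain s2 t2 where ye: "y = (\<lambda>n. s2 * a n + t2 * b n)" using y unfolding span2_def by blast
  define d where "d = s1 * t2 - s2 * t1"
  have d: "d \<noteq> 0"
  proof
    assume d0: "d = 0"
    have "t2 * s1 - t1 * s2 = 0 \<and> - t1 * t2 + t1 * t2 = 0" using d0 unfolding d_def by (simp add: algebra_simps)
    have "\<And>n. t2 * x n + (- t1) * y n = 0"
      unfolding xe ye using d0 unfolding d_def by (simp add: algebra_simps)
    then have h1: "t2 = 0 \<and> - t1 = 0" by (rule ind2D[OF xy])
    have "\<And>n. s2 * x n + (- s1) * y n = 0"
      unfolding xe ye using d0 unfolding d_def by (simp add: algebra_simps)
    then have h2: "s2 = 0 \<and> - s1 = 0" by (rule ind2D[OF xy])
    have "\<And>n. 1 * x n + 0 * y n = 0" unfolding xe using h1 h2 by simp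
    then have "(1::complex) = 0 \<and> (0::complex) = 0" by (rule ind2D[OF xy])
    then show False by simp
  qed
  have "a = (\<lambda>n. (t2 / d) * x n + (- t1 / d) * y n)"
  proof
    fix n
    have e1: "t2 * x n - t1 * y n = d * a n" unfolding xe ye d_def by (simp add: algebra_simps)
    have "(t2 / d) * x n + (- t1 / d) * y n = (t2 * x n - t1 * y n) / d" using d by (simp add: field_simps)
    then have "(t2 / d) * x n + (- t1 / d) * y n = (d * a n) / d" using e1 by simp
    then show "a n = (t2 / d) * x n + (- t1 / d) * y n" using d by simp
  qed
  then have a: "a \<in> span2 x y" unfolding span2_def by blast
  have "b = (\<lambda>n. (- s2 / d) * x n + (s1 / d) * y n)"
  proof
    fix n
    have e1: "s1 * y n - s2 * x n = d * b n" unfolding xe ye d_def by (simp add: algebra_simps)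
    have "(- s2 / d) * x n + (s1 / d) * y n = (s1 * y n - s2 * x n) / d" using d by (simp add: field_simps)
    then have "(- s2 / d) * x n + (s1 / d) * y n = (d * b n) / d" using e1 by simp
    then show "b n = (- s2 / d) * x n + (s1 / d) * y n" using d by simp
  qed
  then have b: "b \<in> span2 x y" unfolding span2_def by blast
  show "span2 a b \<subseteq> span2 x y" using span2_sub[OF a b] .
qed

lemma ind2_pick:
  assumes ab: "ind2 a b" and x: "x \<in> span2 a b" and nz: "x \<noteq> zero4"
  shows "ind2 x a \<or> ind2 x b"
proof -
  obtain s t where xe: "x = (\<lambda>n. s * a n + t * b n)" using x unfolding span2_def by blast
  show ?thesis
  proof (cases "s = 0")
    case False
    have "ind2 x b" unfolding ind2_def
    proof (intro allI impI)
      fix k l assume h: "\<forall>n. k * x n + l * b n = 0"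
      have "\<And>n. (k * s) * a n + (k * t + l) * b n = 0" using h unfolding xe by (simp add: algebra_simps)
      then have "k * s = 0 \<and> k * t + l = 0" by (rule ind2D[OF ab])
      then show "k = 0 \<and> l = 0" using False by auto
    qed
    then show ?thesis by simp
  next
    case True
    have "ind2 x a" unfolding ind2_def
    proof (intro allI impI)
      fix k l assume h: "\<forall>n. k * x n + l * a n = 0"
      have "\<And>n. l * a n + (k * t) * b n = 0" using h True unfolding xe by (simp add: algebra_simps)
      then have "l = 0 \<and> k * t = 0" by (rule ind2D[OF ab])
      moreover have "t \<noteq> 0" using nz True unfolding xe zero4_def by auto
      ultimately show "k = 0 \<and> l = 0" by simp
    qed
    then show ?thesis by simp
  qed
qed

lemma coord_unique:
  assumes "ind3 p u w" "(\<lambda>n. a * p n + b * u n + g * w n) = (\<lambda>n. a' * p n + b' * u n + g' * w n)"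
  shows "a = a' \<and> b = b' \<and> g = g'"
proof -
  have "\<And>n. (a - a') * p n + (b - b') * u n + (g - g') * w n = 0"
    using fun_cong[OF assms(2)] by (simp add: algebra_simps)
  then have "a - a' = 0 \<and> b - b' = 0 \<and> g - g' = 0" by (rule ind3D[OF assms(1)])
  then show ?thesis by simp
qed

lemma rat_line_span:
  assumes "rat_line L"
  shows "\<exists>u v. supp4 u \<and> supp4 v \<and> ind2 (cv u) (cv v) \<and> L = span2 (cv u) (cv v)"
proof -
  obtain a b where "lin_indep2 a b" "L = line_of a b" using assms unfolding rat_line_def by blast
  then show ?thesis using kernel2[of a b] unfolding supp4_def by metis
qed

lemma form_cv: "(\<Sum>i<4. of_rat (a i) * cv u i) = (of_rat (\<Sum>i<4. a i * u i) :: complex)"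
  by (simp add: cv_def of_rat_sum of_rat_mult)

lemma ind2_lin:
  assumes "supp4 u" "supp4 v" "ind2 (cv u) (cv v)"
  shows "lin_indep2 u v"
  unfolding lin_indep2_def
proof (intro allI impI)
  fix s t assume h: "\<forall>i<4. s * u i + t * v i = 0"
  have "\<And>n. of_rat s * cv u n + of_rat t * cv v n = 0"
  proof -
    fix n
    show "of_rat s * cv u n + of_rat t * cv v n = 0"
    proof (cases "n < 4")
      case True
      then have "s * u n + t * v n = 0" using h by simp
      then have "of_rat (s * u n + t * v n) = (0::complex)" by simp
      then show ?thesis by (simp add: cv_def of_rat_add of_rat_mult)
    next
      case False
      then show ?thesis using assms(1,2) unfolding supp4_def cv_def by simp
    qed
  qed
  then have "of_rat s = (0::complex) \<and> of_rat t = (0::complex)" by (rule ind2D[OF assms(3)])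
  then show "s = 0 \<and> t = 0" by simp
qed

lemma cv_in_line:
  assumes "supp4 u" "(\<Sum>i<4. a i * u i) = 0" "(\<Sum>i<4. b i * u i) = 0"
  shows "cv u \<in> line_of a b"
  unfolding line_of_def using assms pt4_cv[OF assms(1)] by (simp add: form_cv)

lemma line_cv_eq:
  assumes "cv u \<in> line_of a b"
  shows "(\<Sum>i<4. a i * u i) = 0" "(\<Sum>i<4. b i * u i) = 0"
proof -
  have "(\<Sum>i<4. of_rat (a i) * cv u i) = (0::complex)" "(\<Sum>i<4. of_rat (b i) * cv u i) = (0::complex)"
    using assms unfolding line_of_def by auto
  then show "(\<Sum>i<4. a i * u i) = 0" "(\<Sum>i<4. b i * u i) = 0" unfolding form_cv by simp_all
qed

lemma rat_span2:
  assumes su: "supp4 u0" and sv: "supp4 v0" and ind: "ind2 (cv u0) (cv v0)"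
  shows "rat_line (span2 (cv u0) (cv v0))"
proof -
  have li: "lin_indep2 u0 v0" by (rule ind2_lin[OF su sv ind])
  obtain a' b' where ab': "\<forall>i\<ge>4. a' i = 0" "\<forall>i\<ge>4. b' i = 0" "ind2 (cv a') (cv b')"
    "line_of u0 v0 = span2 (cv a') (cv b')" using kernel2[OF li] by blast
  have sa: "supp4 a'" "supp4 b'" using ab'(1,2) unfolding supp4_def by auto
  have "cv a' \<in> line_of u0 v0" "cv b' \<in> line_of u0 v0"
    unfolding ab'(4) using span2_mem[of 1 "cv a'" 0 "cv b'"] span2_mem[of 0 "cv a'" 1 "cv b'"] by simp_all
  then have o1: "(\<Sum>i<4. u0 i * a' i) = 0" "(\<Sum>i<4. v0 i * a' i) = 0"
     and o2: "(\<Sum>i<4. u0 i * b' i) = 0" "(\<Sum>i<4. v0 i * b' i) = 0"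
    using line_cv_eq by blast+
  have li2: "lin_indep2 a' b'" by (rule ind2_lin[OF sa ab'(3)])
  obtain a'' b'' where ab'': "\<forall>i\<ge>4. a'' i = 0" "\<forall>i\<ge>4. b'' i = 0" "ind2 (cv a'') (cv b'')"
    "line_of a' b' = span2 (cv a'') (cv b'')" using kernel2[OF li2] by blast
  have "cv u0 \<in> line_of a' b'" using cv_in_line[OF su] o1(1) o2(1) by (simp add: mult.commute)
  moreover have "cv v0 \<in> line_of a' b'" using cv_in_line[OF sv] o1(2) o2(2) by (simp add: mult.commute)
  ultimately have "span2 (cv u0) (cv v0) = span2 (cv a'') (cv b'')"
    unfolding ab''(4) using exchange[OF ab''(3) _ _ ind] by blast
  then have "span2 (cv u0) (cv v0) = line_of a' b'" using ab''(4) by simp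
  then show ?thesis unfolding rat_line_def using li2 by blast
qed

lemma rat_meet_point:
  assumes li: "lin_indep2 a b" and su: "supp4 u2" and sv: "supp4 v2" and ind: "ind2 (cv u2) (cv v2)"
    and xl: "x \<in> line_of a b" and xm: "x \<in> span2 (cv u2) (cv v2)" and nz: "x \<noteq> zero4"
  shows "\<exists>p0. supp4 p0 \<and> cv p0 \<in> line_of a b \<and> cv p0 \<in> span2 (cv u2) (cv v2) \<and> cv p0 \<noteq> zero4"
proof -
  obtain s t where xe: "x = (\<lambda>n. s * cv u2 n + t * cv v2 n)" using xm unfolding span2_def by blast
  define a1 where "a1 = (\<Sum>i<4. a i * u2 i)"
  define b1 where "b1 = (\<Sum>i<4. a i * v2 i)"
  define a2 where "a2 = (\<Sum>i<4. b i * u2 i)"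
  define b2 where "b2 = (\<Sum>i<4. b i * v2 i)"
  have fa: "(\<Sum>i<4. of_rat (a i) * x i) = s * of_rat a1 + t * of_rat b1"
    unfolding xe a1_def b1_def by (simp add: algebra_simps sum.distrib sum_distrib_left form_cv[symmetric])
  have fb: "(\<Sum>i<4. of_rat (b i) * x i) = s * of_rat a2 + t * of_rat b2"
    unfolding xe a2_def b2_def by (simp add: algebra_simps sum.distrib sum_distrib_left form_cv[symmetric])
  have e1: "s * of_rat a1 + t * of_rat b1 = 0" and e2: "s * of_rat a2 + t * of_rat b2 = 0"
    using xl fa fb unfolding line_of_def by auto
  have st: "s \<noteq> 0 \<or> t \<noteq> 0" using nz unfolding xe zero4_def by auto
  have "of_rat (a1 * b2 - a2 * b1) * s = (0::complex)"
  proof -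
    have "of_rat b2 * (s * of_rat a1 + t * of_rat b1) - of_rat b1 * (s * of_rat a2 + t * of_rat b2) = (0::complex)"
      using e1 e2 by simp
    then show ?thesis by (simp add: of_rat_diff of_rat_mult algebra_simps)
  qed
  moreover have "of_rat (a1 * b2 - a2 * b1) * t = (0::complex)"
  proof -
    have "of_rat a1 * (s * of_rat a2 + t * of_rat b2) - of_rat a2 * (s * of_rat a1 + t * of_rat b1) = (0::complex)"
      using e1 e2 by simp
    then show ?thesis by (simp add: of_rat_diff of_rat_mult algebra_simps)
  qed
  ultimately have det: "a1 * b2 - a2 * b1 = 0" using st by auto
  obtain s0 t0 where st0: "s0 \<noteq> 0 \<or> t0 \<noteq> 0" "s0 * a1 + t0 * b1 = 0" "s0 * a2 + t0 * b2 = 0"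
  proof (cases "a1 \<noteq> 0 \<or> b1 \<noteq> 0")
    case True
    show ?thesis by (rule that[of b1 "- a1"]) (use True det in \<open>auto simp: algebra_simps\<close>)
  next
    case False
    show ?thesis
    proof (cases "a2 \<noteq> 0 \<or> b2 \<noteq> 0")
      case True
      show ?thesis by (rule that[of b2 "- a2"]) (use True det in \<open>auto simp: algebra_simps\<close>)
    next
      case False2: False
      show ?thesis by (rule that[of 1 0]) (use False False2 in auto)
    qed
  qed
  define p0 where "p0 = (\<lambda>i. s0 * u2 i + t0 * v2 i)"
  have sp: "supp4 p0" using su sv unfolding supp4_def p0_def by simp
  have cvp: "cv p0 = (\<lambda>n. of_rat s0 * cv u2 n + of_rat t0 * cv v2 n)"
    unfolding p0_def cv_def by (simp add: of_rat_add of_rat_mult)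
  have "(\<Sum>i<4. a i * p0 i) = s0 * a1 + t0 * b1"
    unfolding p0_def a1_def b1_def by (simp add: algebra_simps sum.distrib sum_distrib_left)
  moreover have "(\<Sum>i<4. b i * p0 i) = s0 * a2 + t0 * b2"
    unfolding p0_def a2_def b2_def by (simp add: algebra_simps sum.distrib sum_distrib_left)
  ultimately have "cv p0 \<in> line_of a b" using cv_in_line[OF sp] st0 by simp
  moreover have "cv p0 \<in> span2 (cv u2) (cv v2)" unfolding cvp by (rule span2_mem)
  moreover have "cv p0 \<noteq> zero4"
  proof
    assume "cv p0 = zero4"
    then have "\<And>n. of_rat s0 * cv u2 n + of_rat t0 * cv v2 n = 0" unfolding cvp zero4_def by (simp add: fun_eq_iff)
    then have "of_rat s0 = (0::complex) \<and> of_rat t0 = (0::complex)" by (rule ind2D[OF ind])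
    then show False using st0(1) by simp
  qed
  ultimately show ?thesis using sp by blast
qed

definition T3Q :: "(nat \<Rightarrow> nat \<Rightarrow> nat \<Rightarrow> rat) \<Rightarrow> (nat \<Rightarrow> rat) \<Rightarrow> (nat \<Rightarrow> rat) \<Rightarrow> (nat \<Rightarrow> rat) \<Rightarrow> rat" where
  "T3Q c x y z = (\<Sum>i<4. \<Sum>j<4. \<Sum>k<4. c i j k * x i * y j * z k)"

lemma T3_cv: "T3 c (cv x) (cv y) (cv z) = of_rat (T3Q c x y z)"
  unfolding T3_def T3Q_def cv_def by (simp add: of_rat_sum of_rat_mult)

definition meet :: "(nat \<Rightarrow> complex) set \<Rightarrow> (nat \<Rightarrow> complex) set \<Rightarrow> bool" where
  "meet A B \<longleftrightarrow> (\<exists>x. x \<in> A \<and> x \<in> B \<and> x \<noteq> zero4)"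

definition comb where "comb p u w a b g = (\<lambda>n. a * p n + b * u n + g * w n)"

lemma surface_pts: "L \<in> rat_lines_on c \<Longrightarrow> x \<in> L \<Longrightarrow> cubic_eval c x = 0"
  unfolding rat_lines_on_def by auto

lemma ind3_of_ind2:
  assumes pu: "ind2 p u" and notin: "w \<notin> span2 p u"
  shows "ind3 p u w"
  unfolding ind3_def
proof (intro allI impI)
  fix a b g assume h: "\<forall>n. a * p n + b * u n + g * w n = 0"
  show "a = 0 \<and> b = 0 \<and> g = 0"
  proof (cases "g = 0")
    case True
    then have "\<And>n. a * p n + b * u n = 0" using h by simp
    then have "a = 0 \<and> b = 0" by (rule ind2D[OF pu])
    then show ?thesis using True by simp
  next
    case False
    have "w = (\<lambda>n. (- a / g) * p n + (- b / g) * u n)"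
    proof
      fix n
      have "g * w n = - (a * p n + b * u n)" unfolding eq_neg_iff_add_eq_0
        using h[rule_format, of n] by (simp add: algebra_simps)
      then have "w n = - (a * p n + b * u n) / g" using False by (simp add: eq_divide_eq mult.commute)
      then show "w n = (- a / g) * p n + (- b / g) * u n" by (simp add: add_divide_distrib diff_divide_distrib)
    qed
    then have "w \<in> span2 p u" unfolding span2_def by blast
    then show ?thesis using notin by simp
  qed
qed

lemma pick_partner:
  assumes "supp4 u1" "supp4 v1" "ind2 (cv u1) (cv v1)" "L = span2 (cv u1) (cv v1)"
    and "x \<in> L" "x \<noteq> zero4"
  shows "\<exists>u0. supp4 u0 \<and> ind2 x (cv u0) \<and> L = span2 x (cv u0)"
proof -
  have "ind2 x (cv u1) \<or> ind2 x (cv v1)" using ind2_pick[OF assms(3)] assms(4-6) by simp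
  then show ?thesis
  proof
    assume h: "ind2 x (cv u1)"
    have "span2 x (cv u1) = L" unfolding assms(4)
      by (rule exchange[OF assms(3)]) (use assms(4,5) h span2_mem[of 1 "cv u1" 0 "cv v1"] in simp_all)
    then show ?thesis using h assms(1) by metis
  next
    assume h: "ind2 x (cv v1)"
    have "span2 x (cv v1) = L" unfolding assms(4)
      by (rule exchange[OF assms(3)]) (use assms(4,5) h span2_mem[of 0 "cv u1" 1 "cv v1"] in simp_all)
    then show ?thesis using h assms(2) by metis
  qed
qed

lemma plane_setup:
  assumes L: "L \<in> rat_lines_on c" and M: "M \<in> rat_lines_on c" and LM: "L \<noteq> M" and mt: "meet L M"
  shows "\<exists>p0 u0 w0. supp4 p0 \<and> supp4 u0 \<and> supp4 w0 \<and> ind3 (cv p0) (cv u0) (cv w0)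
     \<and> L = span2 (cv p0) (cv u0) \<and> M = span2 (cv p0) (cv w0) \<and> plane_ok c (cv p0) (cv u0) (cv w0)"
proof -
  obtain a b where ab: "lin_indep2 a b" "L = line_of a b" using L unfolding rat_lines_on_def rat_line_def by blast
  obtain u1 v1 where uv1: "supp4 u1" "supp4 v1" "ind2 (cv u1) (cv v1)" "L = span2 (cv u1) (cv v1)"
    using L rat_line_span unfolding rat_lines_on_def by blast
  obtain u2 v2 where uv2: "supp4 u2" "supp4 v2" "ind2 (cv u2) (cv v2)" "M = span2 (cv u2) (cv v2)"
    using M rat_line_span unfolding rat_lines_on_def by blast
  obtain x where x: "x \<in> L" "x \<in> M" "x \<noteq> zero4" using mt unfolding meet_def by blast
  obtain p0 where p0: "supp4 p0" "cv p0 \<in> line_of a b" "cv p0 \<in> span2 (cv u2) (cv v2)" "cv p0 \<noteq> zero4"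
    using rat_meet_point[OF ab(1) uv2(1-3), of x] x ab(2) uv2(4) by blast
  have pL: "cv p0 \<in> L" and pM: "cv p0 \<in> M" using p0 ab(2) uv2(4) by auto
  obtain u0 where u0: "supp4 u0" "ind2 (cv p0) (cv u0)" "L = span2 (cv p0) (cv u0)"
    using pick_partner[OF uv1 pL p0(4)] by blast
  obtain w0 where w0: "supp4 w0" "ind2 (cv p0) (cv w0)" "M = span2 (cv p0) (cv w0)"
    using pick_partner[OF uv2 pM p0(4)] by blast
  have "cv w0 \<notin> span2 (cv p0) (cv u0)"
  proof
    assume win: "cv w0 \<in> span2 (cv p0) (cv u0)"
    have "span2 (cv p0) (cv w0) = span2 (cv p0) (cv u0)"
      by (rule exchange[OF u0(2) _ win w0(2)]) (use span2_mem[of 1 "cv p0" 0 "cv u0"] in simp)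
    then show False using LM u0(3) w0(3) by simp
  qed
  then have i3: "ind3 (cv p0) (cv u0) (cv w0)" by (rule ind3_of_ind2[OF u0(2)])
  have "plane_ok c (cv p0) (cv u0) (cv w0)"
    unfolding plane_ok_def
  proof (intro conjI allI)
    show "pt4 (cv p0)" "pt4 (cv u0)" "pt4 (cv w0)" using p0(1) u0(1) w0(1) by (simp_all add: pt4_cv)
    show "ind3 (cv p0) (cv u0) (cv w0)" by (rule i3)
    fix s t
    show "cubic_eval c (\<lambda>n. s * cv p0 n + t * cv u0 n) = 0"
      using surface_pts[OF L] u0(3) span2_mem by blast
    show "cubic_eval c (\<lambda>n. s * cv p0 n + t * cv w0 n) = 0"
      using surface_pts[OF M] w0(3) span2_mem by blast
  qed
  then show ?thesis using p0(1) u0 w0 i3 by blast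
qed

definition lamQ where "lamQ c p u w = T3Q c p u w + T3Q c p w u + T3Q c u p w + T3Q c u w p + T3Q c w p u + T3Q c w u p"
definition muQ where "muQ c p u w = T3Q c u u w + T3Q c u w u + T3Q c w u u"

lemma lam_cv: "lam c (cv p) (cv u) (cv w) = of_rat (lamQ c p u w)"
  unfolding lam_def lamQ_def T3_cv by (simp add: of_rat_add)
lemma mu_cv: "mu c (cv p) (cv u) (cv w) = of_rat (muQ c p u w)"
  unfolding mu_def muQ_def T3_cv by (simp add: of_rat_add)

definition Nset where "Nset c p u w = {y. \<exists>a b g. y = comb p u w a b g \<and>
    lam c p u w * a + mu c p u w * b + mu c p w u * g = 0}"

lemma ind3_swap: "ind3 p u w \<Longrightarrow> ind3 p w u"
proof -
  assume h: "ind3 p u w"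
  show "ind3 p w u" unfolding ind3_def
  proof (intro allI impI)
    fix a b g assume e: "\<forall>n. a * p n + b * w n + g * u n = 0"
    have "\<And>n. a * p n + g * u n + b * w n = 0" using e by (simp add: algebra_simps)
    then have "a = 0 \<and> g = 0 \<and> b = 0" by (rule ind3D[OF h])
    then show "a = 0 \<and> b = 0 \<and> g = 0" by simp
  qed
qed

lemma plane_ok_swap: "plane_ok c p u w \<Longrightarrow> plane_ok c p w u"
  unfolding plane_ok_def using ind3_swap by blast

lemma lam_swap: "lam c p w u = lam c p u w"
  unfolding lam_def by (simp add: algebra_simps)

context
  fixes c :: "nat \<Rightarrow> nat \<Rightarrow> nat \<Rightarrow> rat" and p u w :: "nat \<Rightarrow> complex"
  assumes ok: "plane_ok c p u w"
begin

lemma i3: "ind3 p u w" using ok unfolding plane_ok_def by simp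
lemma pts: "pt4 p" "pt4 u" "pt4 w" using ok unfolding plane_ok_def by simp_all

lemma comb_eq: "comb p u w a b g = comb p u w a' b' g' \<longleftrightarrow> a = a' \<and> b = b' \<and> g = g'"
  using coord_unique[OF i3] unfolding comb_def by blast

lemma comb_zero: "comb p u w a b g = zero4 \<longleftrightarrow> a = 0 \<and> b = 0 \<and> g = 0"
proof -
  have z: "zero4 = comb p u w 0 0 0" unfolding zero4_def comb_def by simp
  show ?thesis by (simp only: z comb_eq)
qed

lemma inL: "comb p u w a b g \<in> span2 p u \<longleftrightarrow> g = 0"
proof
  assume "comb p u w a b g \<in> span2 p u"
  then obtain s t where "comb p u w a b g = (\<lambda>n. s * p n + t * u n)" unfolding span2_def by blast
  then have "comb p u w a b g = comb p u w s t 0" unfolding comb_def by simp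
  then show "g = 0" using comb_eq by simp
next
  assume "g = 0"
  then show "comb p u w a b g \<in> span2 p u" unfolding comb_def using span2_mem[of a p b u] by simp
qed

lemma inM: "comb p u w a b g \<in> span2 p w \<longleftrightarrow> b = 0"
proof
  assume "comb p u w a b g \<in> span2 p w"
  then obtain s t where "comb p u w a b g = (\<lambda>n. s * p n + t * w n)" unfolding span2_def by blast
  then have "comb p u w a b g = comb p u w s 0 t" unfolding comb_def by simp
  then show "b = 0" using comb_eq by simp
next
  assume "b = 0"
  then show "comb p u w a b g \<in> span2 p w" unfolding comb_def using span2_mem[of a p g w] by simp
qed

lemma inN: "comb p u w a b g \<in> Nset c p u w \<longleftrightarrow> lam c p u w * a + mu c p u w * b + mu c p w u * g = 0"
  unfolding Nset_def using comb_eq by auto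

lemma surf: "cubic_eval c (comb p u w a b g) = 0 \<longleftrightarrow> b = 0 \<or> g = 0 \<or> lam c p u w * a + mu c p u w * b + mu c p w u * g = 0"
  unfolding comb_def expand3[OF ok] by simp

lemma L_coords: "x \<in> span2 p u \<Longrightarrow> \<exists>a b. x = comb p u w a b 0"
  unfolding span2_def comb_def by auto
lemma M_coords: "x \<in> span2 p w \<Longrightarrow> \<exists>a g. x = comb p u w a 0 g"
  unfolding span2_def comb_def by auto

lemma comb_lin: "(\<lambda>n. s * comb p u w a b g n + t * comb p u w a' b' g' n) = comb p u w (s*a+t*a') (s*b+t*b') (s*g+t*g')"
  unfolding comb_def by (simp add: algebra_simps)

lemma N_surface: "x \<in> Nset c p u w \<Longrightarrow> cubic_eval c x = 0"
  unfolding Nset_def using surf by auto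

end

lemma cv_comb2: "cv (\<lambda>i. s * x i + t * y i) = (\<lambda>n. of_rat s * cv x n + of_rat t * cv y n)"
  unfolding cv_def by (simp add: of_rat_add of_rat_mult)

lemma supp4_comb2: "supp4 x \<Longrightarrow> supp4 y \<Longrightarrow> supp4 (\<lambda>i. s * x i + t * y i)"
  unfolding supp4_def by simp

lemma N_rational:
  assumes sm: "smooth_cubic c" and ok: "plane_ok c (cv p0) (cv u0) (cv w0)"
    and sp: "supp4 p0" "supp4 u0" "supp4 w0"
  shows "\<exists>n1 n2. supp4 n1 \<and> supp4 n2 \<and> ind2 (cv n1) (cv n2) \<and> Nset c (cv p0) (cv u0) (cv w0) = span2 (cv n1) (cv n2)"
proof -
  define P where "P = cv p0"
  define U where "U = cv u0"
  define W where "W = cv w0"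
  note ok' = ok[folded P_def U_def W_def]
  define l where "l = lamQ c p0 u0 w0"
  define m1 where "m1 = muQ c p0 u0 w0"
  define m2 where "m2 = muQ c p0 w0 u0"
  have L: "lam c P U W = of_rat l" unfolding l_def P_def U_def W_def by (rule lam_cv)
  have M1: "mu c P U W = of_rat m1" unfolding m1_def P_def U_def W_def by (rule mu_cv)
  have M2: "mu c P W U = of_rat m2" unfolding m2_def P_def U_def W_def by (rule mu_cv)
  have nd1: "l \<noteq> 0 \<or> m1 \<noteq> 0" using no_double[OF sm ok'] L M1 by simp
  have nd2: "l \<noteq> 0 \<or> m2 \<noteq> 0" using no_double[OF sm plane_ok_swap[OF ok']] M2 L lam_swap[of c P U W] by simp
  have Nd: "Nset c P U W = {y. \<exists>a b g. y = comb P U W a b g \<and> of_rat l * a + of_rat m1 * b + of_rat m2 * g = 0}"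
    unfolding Nset_def L M1 M2 ..
  show ?thesis
  proof (cases "l = 0")
    case False
    define n1 where "n1 = (\<lambda>i. m1 * p0 i + (- l) * u0 i)"
    define n2 where "n2 = (\<lambda>i. m2 * p0 i + (- l) * w0 i)"
    have c1: "cv n1 = comb P U W (of_rat m1) (- of_rat l) 0" unfolding n1_def cv_comb2 comb_def P_def U_def
      by (simp add: of_rat_minus)
    have c2: "cv n2 = comb P U W (of_rat m2) 0 (- of_rat l)" unfolding n2_def cv_comb2 comb_def P_def W_def
      by (simp add: of_rat_minus)
    have lc: "(of_rat l :: complex) \<noteq> 0" using False by simp
    have eq: "Nset c P U W = span2 (cv n1) (cv n2)"
    proof (intro equalityI subsetI)
      fix y assume "y \<in> Nset c P U W"
      then obtain a b g where y: "y = comb P U W a b g" and r: "of_rat l * a + of_rat m1 * b + of_rat m2 * g = 0"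
        unfolding Nd by blast
      have a: "a = - (of_rat m1 * b + of_rat m2 * g) / of_rat l" using r lc
        by (simp add: eq_divide_eq eq_neg_iff_add_eq_0 algebra_simps)
      have "y = (\<lambda>n. (- b / of_rat l) * cv n1 n + (- g / of_rat l) * cv n2 n)"
        unfolding c1 c2 comb_lin[OF ok'] y comb_eq[OF ok'] using lc a by (simp add: field_simps)
      then show "y \<in> span2 (cv n1) (cv n2)" unfolding span2_def by blast
    next
      fix y assume "y \<in> span2 (cv n1) (cv n2)"
      then obtain s t where "y = (\<lambda>n. s * cv n1 n + t * cv n2 n)" unfolding span2_def by blast
      then have y: "y = comb P U W (s * of_rat m1 + t * of_rat m2) (s * - of_rat l) (t * - of_rat l)"
        unfolding c1 c2 comb_lin[OF ok'] by simp
      show "y \<in> Nset c P U W" unfolding Nd y by (auto simp: comb_eq[OF ok'] algebra_simps)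
    qed
    have ind: "ind2 (cv n1) (cv n2)" unfolding ind2_def
    proof (intro allI impI)
      fix s t assume "\<forall>n. s * cv n1 n + t * cv n2 n = 0"
      then have "(\<lambda>n. s * cv n1 n + t * cv n2 n) = zero4" unfolding zero4_def by auto
      then have "comb P U W (s * of_rat m1 + t * of_rat m2) (s * - of_rat l + t * 0) (s * 0 + t * - of_rat l) = zero4"
        unfolding c1 c2 comb_lin[OF ok'] .
      then show "s = 0 \<and> t = 0" unfolding comb_zero[OF ok'] using lc by simp
    qed
    show ?thesis using eq ind supp4_comb2[OF sp(1,2)] supp4_comb2[OF sp(1,3)] unfolding n1_def n2_def P_def U_def W_def
      by blast
  next
    case True
    then have m1: "m1 \<noteq> 0" and m2: "m2 \<noteq> 0" using nd1 nd2 by auto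
    define n2 where "n2 = (\<lambda>i. m2 * u0 i + (- m1) * w0 i)"
    have c1: "cv p0 = comb P U W 1 0 0" unfolding comb_def P_def by simp
    have c2: "cv n2 = comb P U W 0 (of_rat m2) (- of_rat m1)" unfolding n2_def cv_comb2 comb_def U_def W_def
      by (simp add: of_rat_minus)
    have mc: "(of_rat m2 :: complex) \<noteq> 0" using m2 by simp
    have eq: "Nset c P U W = span2 (cv p0) (cv n2)"
    proof (intro equalityI subsetI)
      fix y assume "y \<in> Nset c P U W"
      then obtain a b g where y: "y = comb P U W a b g" and r: "of_rat m1 * b + of_rat m2 * g = 0"
        unfolding Nd using True by auto
      have "of_rat m2 * g = - (of_rat m1 * b)" using r by (simp add: eq_neg_iff_add_eq_0 algebra_simps)
      then have g: "g = - (of_rat m1 * b) / of_rat m2" using mc by (simp add: field_simps)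
      have "y = (\<lambda>n. a * cv p0 n + (b / of_rat m2) * cv n2 n)"
        unfolding c1 c2 comb_lin[OF ok'] y comb_eq[OF ok'] using mc g by (simp add: field_simps)
      then show "y \<in> span2 (cv p0) (cv n2)" unfolding span2_def by blast
    next
      fix y assume "y \<in> span2 (cv p0) (cv n2)"
      then obtain s t where "y = (\<lambda>n. s * cv p0 n + t * cv n2 n)" unfolding span2_def by blast
      then have y: "y = comb P U W (s * 1 + t * 0) (s * 0 + t * of_rat m2) (s * 0 + t * - of_rat m1)"
        unfolding c1 c2 comb_lin[OF ok'] by simp
      show "y \<in> Nset c P U W" unfolding Nd y using True by (auto simp: comb_eq[OF ok'] algebra_simps)
    qed
    have ind: "ind2 (cv p0) (cv n2)" unfolding ind2_def
    proof (intro allI impI)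
      fix s t assume "\<forall>n. s * cv p0 n + t * cv n2 n = 0"
      then have "(\<lambda>n. s * cv p0 n + t * cv n2 n) = zero4" unfolding zero4_def by auto
      then have "comb P U W (s * 1 + t * 0) (s * 0 + t * of_rat m2) (s * 0 + t * - of_rat m1) = zero4"
        unfolding c1 c2 comb_lin[OF ok'] .
      then show "s = 0 \<and> t = 0" unfolding comb_zero[OF ok'] using mc by simp
    qed
    show ?thesis using eq ind sp(1) supp4_comb2[OF sp(2,3)] unfolding n2_def P_def U_def W_def
      by blast
  qed
qed

lemma meetI: "x \<in> A \<Longrightarrow> x \<in> B \<Longrightarrow> x \<noteq> zero4 \<Longrightarrow> meet A B"
  unfolding meet_def by blast

lemma span_of_notin:
  assumes "ind3 p u w" "pt4 p" "pt4 u" "pt4 w" "pt4 z" "z \<notin> span3 p u w"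
  shows "\<forall>y. pt4 y \<longrightarrow> (\<exists>a b c d. \<forall>n. y n = a * p n + b * u n + c * w n + d * z n)"
proof (intro allI impI)
  fix y assume y: "pt4 y"
  obtain k0 k1 k2 k3 k4 where k: "k0 \<noteq> 0 \<or> k1 \<noteq> 0 \<or> k2 \<noteq> 0 \<or> k3 \<noteq> 0 \<or> k4 \<noteq> 0"
    "\<forall>n. k0 * p n + k1 * u n + k2 * w n + k3 * z n + k4 * y n = 0"
    using five_dep[OF assms(2-5) y] by blast
  have k4: "k4 \<noteq> 0"
  proof
    assume zz: "k4 = 0"
    show False
    proof (cases "k3 = 0")
      case True
      then have "k0 = 0 \<and> k1 = 0 \<and> k2 = 0" using k(2) zz by (intro ind3D[OF assms(1)]) simp
      then show False using k(1) zz True by simp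
    next
      case False
      have "z = (\<lambda>n. (- k0 / k3) * p n + (- k1 / k3) * u n + (- k2 / k3) * w n)"
      proof
        fix n
        have "k3 * z n = - (k0 * p n + k1 * u n + k2 * w n)" unfolding eq_neg_iff_add_eq_0
          using k(2)[rule_format, of n] zz by (simp add: algebra_simps)
        then have "z n = - (k0 * p n + k1 * u n + k2 * w n) / k3"
          using False by (simp add: eq_divide_eq mult.commute)
        also have "\<dots> = (- k0 / k3) * p n + (- k1 / k3) * u n + (- k2 / k3) * w n"
          by (simp add: add_divide_distrib diff_divide_distrib)
        finally show "z n = (- k0 / k3) * p n + (- k1 / k3) * u n + (- k2 / k3) * w n" .
      qed
      then show False using assms(6) unfolding span3_def by blast
    qed
  qed
  have "\<forall>n. y n = (- k0 / k4) * p n + (- k1 / k4) * u n + (- k2 / k4) * w n + (- k3 / k4) * z n"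
  proof
    fix n
    have "k4 * y n = - (k0 * p n + k1 * u n + k2 * w n + k3 * z n)" unfolding eq_neg_iff_add_eq_0
      using k(2)[rule_format, of n] by (simp add: algebra_simps)
    then have "y n = - (k0 * p n + k1 * u n + k2 * w n + k3 * z n) / k4"
      using k4 by (simp add: eq_divide_eq mult.commute)
    also have "\<dots> = (- k0 / k4) * p n + (- k1 / k4) * u n + (- k2 / k4) * w n + (- k3 / k4) * z n"
      by (simp add: add_divide_distrib diff_divide_distrib)
    finally show "y n = (- k0 / k4) * p n + (- k1 / k4) * u n + (- k2 / k4) * w n + (- k3 / k4) * z n" .
  qed
  then show "\<exists>a b c d. \<forall>n. y n = a * p n + b * u n + c * w n + d * z n" by blast
qed

lemma ind2_of_ind3: "ind3 p u w \<Longrightarrow> ind2 p u" "ind3 p u w \<Longrightarrow> ind2 p w"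
proof -
  assume h: "ind3 p u w"
  show "ind2 p u" unfolding ind2_def
  proof (intro allI impI)
    fix s t assume "\<forall>n. s * p n + t * u n = 0"
    then have "\<And>n. s * p n + t * u n + 0 * w n = 0" by simp
    then have "s = 0 \<and> t = 0 \<and> (0::complex) = 0" by (rule ind3D[OF h])
    then show "s = 0 \<and> t = 0" by simp
  qed
  show "ind2 p w" unfolding ind2_def
  proof (intro allI impI)
    fix s t assume "\<forall>n. s * p n + t * w n = 0"
    then have "\<And>n. s * p n + 0 * u n + t * w n = 0" by simp
    then have "s = 0 \<and> (0::complex) = 0 \<and> t = 0" by (rule ind3D[OF h])
    then show "s = 0 \<and> t = 0" by simp
  qed
qed

lemma third_line:
  assumes sm: "smooth_cubic c" and Lr: "L \<in> rat_lines_on c" and Mr: "M \<in> rat_lines_on c"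
    and LM: "L \<noteq> M" and mt: "meet L M"
  shows "\<exists>N\<in>rat_lines_on c. N \<noteq> L \<and> N \<noteq> M \<and> meet N L \<and> meet N M
     \<and> (\<forall>K\<in>rat_lines_on c. meet K L \<or> meet K M \<or> meet K N)
     \<and> (\<forall>N'\<in>rat_lines_on c. N' \<noteq> L \<longrightarrow> N' \<noteq> M \<longrightarrow> meet N' L \<longrightarrow> meet N' M \<longrightarrow> N' = N)"
proof -
  obtain p0 u0 w0 where sp: "supp4 p0" "supp4 u0" "supp4 w0" and i3: "ind3 (cv p0) (cv u0) (cv w0)"
    and Le: "L = span2 (cv p0) (cv u0)" and Me: "M = span2 (cv p0) (cv w0)"
    and ok: "plane_ok c (cv p0) (cv u0) (cv w0)"
    using plane_setup[OF Lr Mr LM mt] by blast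
  obtain n1 n2 where nn: "supp4 n1" "supp4 n2" "ind2 (cv n1) (cv n2)"
    and Ne: "Nset c (cv p0) (cv u0) (cv w0) = span2 (cv n1) (cv n2)"
    using N_rational[OF sm ok sp] by blast
  define P where "P = cv p0"
  define U where "U = cv u0"
  define W where "W = cv w0"
  define N where "N = Nset c P U W"
  define l where "l = lam c P U W"
  define m1 where "m1 = mu c P U W"
  define m2 where "m2 = mu c P W U"
  note ok' = ok[folded P_def U_def W_def]
  have i3': "ind3 P U W" using i3 unfolding P_def U_def W_def .
  have Le': "L = span2 P U" and Me': "M = span2 P W" using Le Me unfolding P_def U_def W_def by auto
  have Ne': "N = span2 (cv n1) (cv n2)" using Ne unfolding N_def P_def U_def W_def .
  have nd1: "l \<noteq> 0 \<or> m1 \<noteq> 0" using no_double[OF sm ok'] unfolding l_def m1_def .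
  have nd2: "l \<noteq> 0 \<or> m2 \<noteq> 0" using no_double[OF sm plane_ok_swap[OF ok']] lam_swap[of c P U W]
    unfolding l_def m2_def by simp
  have inL: "\<And>a b g. comb P U W a b g \<in> L \<longleftrightarrow> g = 0" unfolding Le' by (rule inL[OF ok'])
  have inM: "\<And>a b g. comb P U W a b g \<in> M \<longleftrightarrow> b = 0" unfolding Me' by (rule inM[OF ok'])
  have inN: "\<And>a b g. comb P U W a b g \<in> N \<longleftrightarrow> l * a + m1 * b + m2 * g = 0"
    unfolding N_def l_def m1_def m2_def by (rule inN[OF ok'])
  have surf: "\<And>a b g. cubic_eval c (comb P U W a b g) = 0 \<longleftrightarrow> b = 0 \<or> g = 0 \<or> l * a + m1 * b + m2 * g = 0"
    unfolding l_def m1_def m2_def by (rule surf[OF ok'])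
  have cz: "\<And>a b g. comb P U W a b g = zero4 \<longleftrightarrow> a = 0 \<and> b = 0 \<and> g = 0" by (rule comb_zero[OF ok'])
  have clin: "\<And>s t a b g a' b' g'. (\<lambda>n. s * comb P U W a b g n + t * comb P U W a' b' g' n) = comb P U W (s*a+t*a') (s*b+t*b') (s*g+t*g')"
    by (rule comb_lin[OF ok'])
  have Pc: "P = comb P U W 1 0 0" unfolding comb_def by simp
  have NR: "N \<in> rat_lines_on c"
    unfolding rat_lines_on_def using rat_span2[OF nn] Ne' N_surface[OF ok'] unfolding N_def by auto
  have pts: "pt4 P" "pt4 U" "pt4 W" using ok' unfolding plane_ok_def by auto
  have NL: "N \<noteq> L \<and> meet N L"
  proof (cases "l = 0")
    case False
    have "comb P U W m2 0 (- l) \<in> N" "comb P U W m2 0 (- l) \<notin> L" using False inN inL by (simp_all add: algebra_simps)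
    moreover have "comb P U W m1 (- l) 0 \<in> N" "comb P U W m1 (- l) 0 \<in> L" "comb P U W m1 (- l) 0 \<noteq> zero4"
      using False inN inL cz by (simp_all add: algebra_simps)
    ultimately show ?thesis using meetI by blast
  next
    case True
    then have m: "m1 \<noteq> 0" "m2 \<noteq> 0" using nd1 nd2 by auto
    have "comb P U W 0 m2 (- m1) \<in> N" "comb P U W 0 m2 (- m1) \<notin> L" using m True inN inL by (simp_all add: algebra_simps)
    moreover have "comb P U W 1 0 0 \<in> N" "comb P U W 1 0 0 \<in> L" "comb P U W 1 0 0 \<noteq> zero4"
      using True inN inL cz by simp_all
    ultimately show ?thesis using meetI by blast
  qed
  have NM: "N \<noteq> M \<and> meet N M"
  proof (cases "l = 0")
    case False
    have "comb P U W m1 (- l) 0 \<in> N" "comb P U W m1 (- l) 0 \<notin> M" using False inN inM by (simp_all add: algebra_simps)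
    moreover have "comb P U W m2 0 (- l) \<in> N" "comb P U W m2 0 (- l) \<in> M" "comb P U W m2 0 (- l) \<noteq> zero4"
      using False inN inM cz by (simp_all add: algebra_simps)
    ultimately show ?thesis using meetI by blast
  next
    case True
    then have m: "m1 \<noteq> 0" "m2 \<noteq> 0" using nd1 nd2 by auto
    have "comb P U W 0 m2 (- m1) \<in> N" "comb P U W 0 m2 (- m1) \<notin> M" using m True inN inM by (simp_all add: algebra_simps)
    moreover have "comb P U W 1 0 0 \<in> N" "comb P U W 1 0 0 \<in> M" "comb P U W 1 0 0 \<noteq> zero4"
      using True inN inM cz by simp_all
    ultimately show ?thesis using meetI by blast
  qed
  have cover: "\<forall>K\<in>rat_lines_on c. meet K L \<or> meet K M \<or> meet K N"
  proof
    fix K assume KR: "K \<in> rat_lines_on c"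
    obtain k1 k2 where kk: "supp4 k1" "supp4 k2" "ind2 (cv k1) (cv k2)" "K = span2 (cv k1) (cv k2)"
      using KR rat_line_span unfolding rat_lines_on_def by blast
    obtain x0 x1 x2 x3 x4 where x: "x0 \<noteq> 0 \<or> x1 \<noteq> 0 \<or> x2 \<noteq> 0 \<or> x3 \<noteq> 0 \<or> x4 \<noteq> 0"
      "\<forall>n. x0 * P n + x1 * U n + x2 * W n + x3 * cv k1 n + x4 * cv k2 n = 0"
      using five_dep[OF pts pt4_cv[OF kk(1)] pt4_cv[OF kk(2)]] by blast
    define y where "y = comb P U W x0 x1 x2"
    have yK: "y = (\<lambda>n. (- x3) * cv k1 n + (- x4) * cv k2 n)"
    proof
      fix n show "y n = (- x3) * cv k1 n + (- x4) * cv k2 n"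
        using x(2)[rule_format, of n] unfolding y_def comb_def
        by (simp add: algebra_simps eq_neg_iff_add_eq_0)
    qed
    have yinK: "y \<in> K" unfolding kk(4) yK by (rule span2_mem)
    have ynz: "y \<noteq> zero4"
    proof
      assume "y = zero4"
      then have z3: "x0 = 0 \<and> x1 = 0 \<and> x2 = 0" unfolding y_def cz .
      then have "\<And>n. x3 * cv k1 n + x4 * cv k2 n = 0" using x(2) by simp
      then have "x3 = 0 \<and> x4 = 0" by (rule ind2D[OF kk(3)])
      then show False using x(1) z3 by simp
    qed
    have "cubic_eval c y = 0" by (rule surface_pts[OF KR yinK])
    then have "x1 = 0 \<or> x2 = 0 \<or> l * x0 + m1 * x1 + m2 * x2 = 0" unfolding y_def surf .
    then have "y \<in> M \<or> y \<in> L \<or> y \<in> N" unfolding y_def inL inM inN by blast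
    then show "meet K L \<or> meet K M \<or> meet K N" using yinK ynz meetI by blast
  qed
  have indPU: "ind2 P U" and indPW: "ind2 P W" using ind2_of_ind3[OF i3'] by auto
  have PL: "P \<in> L" using inL[of 1 0 0] Pc by simp
  have PM: "P \<in> M" using inM[of 1 0 0] Pc by simp
  have Pnz: "P \<noteq> zero4" using cz[of 1 0 0] Pc by simp
  have uniq: "\<forall>N'\<in>rat_lines_on c. N' \<noteq> L \<longrightarrow> N' \<noteq> M \<longrightarrow> meet N' L \<longrightarrow> meet N' M \<longrightarrow> N' = N"
  proof (intro ballI impI)
    fix N' assume N'R: "N' \<in> rat_lines_on c" and N'L: "N' \<noteq> L" and N'M: "N' \<noteq> M"
      and me1: "meet N' L" and me2: "meet N' M"
    obtain k1 k2 where kk: "supp4 k1" "supp4 k2" "ind2 (cv k1) (cv k2)" "N' = span2 (cv k1) (cv k2)"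
      using N'R rat_line_span unfolding rat_lines_on_def by blast
    obtain x1 where x1: "x1 \<in> N'" "x1 \<in> L" "x1 \<noteq> zero4" using me1 unfolding meet_def by blast
    obtain x2 where x2: "x2 \<in> N'" "x2 \<in> M" "x2 \<noteq> zero4" using me2 unfolding meet_def by blast
    obtain a1 b1 where x1e: "x1 = comb P U W a1 b1 0" using L_coords[OF ok'] x1(2) Le' by blast
    obtain a2 g2 where x2e: "x2 = comb P U W a2 0 g2" using M_coords[OF ok'] x2(2) Me' by blast
    have onN': "\<And>y. y \<in> N' \<Longrightarrow> cubic_eval c y = 0" by (rule surface_pts[OF N'R])
    have x1K: "x1 \<in> span2 (cv k1) (cv k2)" and x2K: "x2 \<in> span2 (cv k1) (cv k2)" using x1 x2 kk(4) by auto
    show "N' = N"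
    proof (cases "ind2 x1 x2")
      case True
      have N'x: "N' = span2 x1 x2" using exchange[OF kk(3) x1K x2K True] kk(4) by simp
      have b1: "b1 \<noteq> 0"
      proof
        assume "b1 = 0"
        then have "x1 \<in> M" using inM x1e by simp
        then have "span2 x1 x2 = M" using exchange[OF indPW _ _ True] x2(2) Me' by simp
        then show False using N'x N'M by simp
      qed
      have g2: "g2 \<noteq> 0"
      proof
        assume "g2 = 0"
        then have "x2 \<in> L" using inL x2e by simp
        then have "span2 x1 x2 = L" using exchange[OF indPU _ _ True] x1(2) Le' by simp
        then show False using N'x N'L by simp
      qed
      have "(\<lambda>n. 1 * x1 n + 1 * x2 n) \<in> N'" using span2_comb[OF x1K x2K, of 1 1] kk(4) by simp
      moreover have "(\<lambda>n. 1 * x1 n + 1 * x2 n) = comb P U W (1*a1+1*a2) (1*b1+1*0) (1*0+1*g2)"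
        unfolding x1e x2e clin ..
      ultimately have r1: "l * (a1 + a2) + m1 * b1 + m2 * g2 = 0" using onN' surf b1 g2 by fastforce
      have "(\<lambda>n. 1 * x1 n + 2 * x2 n) \<in> N'" using span2_comb[OF x1K x2K, of 1 2] kk(4) by simp
      moreover have "(\<lambda>n. 1 * x1 n + 2 * x2 n) = comb P U W (1*a1+2*a2) (1*b1+2*0) (1*0+2*g2)"
        unfolding x1e x2e clin ..
      ultimately have r2: "l * (a1 + 2 * a2) + m1 * b1 + m2 * (2 * g2) = 0" using onN' surf b1 g2 by fastforce
      have "l * a1 + m1 * b1 + m2 * 0 = 0" using r1 r2 by algebra
      then have x1N: "x1 \<in> N" using inN x1e by simp
      have "l * a2 + m1 * 0 + m2 * g2 = 0" using r1 r2 by algebra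
      then have x2N: "x2 \<in> N" using inN x2e by simp
      have "span2 x1 x2 = N" using exchange[OF nn(3) _ _ True] x1N x2N Ne' by simp
      then show ?thesis using N'x by simp
    next
      case False
      then obtain s t where st: "\<not> (s = 0 \<and> t = 0)" "\<forall>n. s * x1 n + t * x2 n = 0"
        unfolding ind2_def by blast
      have "(\<lambda>n. s * x1 n + t * x2 n) = zero4" using st(2) unfolding zero4_def by auto
      then have z: "s * a1 + t * a2 = 0" "s * b1 + t * 0 = 0" "s * 0 + t * g2 = 0"
        unfolding x1e x2e clin cz by auto
      have b1: "b1 = 0"
      proof (cases "s = 0")
        case False then show ?thesis using z(2) by simp
      next
        case True
        then have "t \<noteq> 0" using st(1) by simp
        then have "a2 = 0" "g2 = 0" using z True by auto
        then show ?thesis using x2(3) x2e cz by simp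
      qed
      have a1: "a1 \<noteq> 0" using x1(3) x1e b1 cz by simp
      have "P = (\<lambda>n. (1 / a1) * x1 n)" unfolding x1e b1 comb_def using a1 by (simp add: fun_eq_iff)
      then have PN': "P \<in> N'" using span2_smult[OF x1K, of "1 / a1"] kk(4) by simp
      have PK: "P \<in> span2 (cv k1) (cv k2)" using PN' kk(4) by simp
      obtain z where zz: "z \<in> N'" "ind2 P z" "pt4 z"
      proof -
        have "ind2 P (cv k1) \<or> ind2 P (cv k2)" using ind2_pick[OF kk(3) PK Pnz] .
        moreover have "cv k1 \<in> N'" "cv k2 \<in> N'" unfolding kk(4)
          using span2_mem[of 1 "cv k1" 0 "cv k2"] span2_mem[of 0 "cv k1" 1 "cv k2"] by simp_all
        ultimately show ?thesis using that pt4_cv[OF kk(1)] pt4_cv[OF kk(2)] by blast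
      qed
      have zK: "z \<in> span2 (cv k1) (cv k2)" using zz(1) kk(4) by simp
      have N'z: "N' = span2 P z" using exchange[OF kk(3) PK zK zz(2)] kk(4) by simp
      show ?thesis
      proof (cases "z \<in> span3 P U W")
        case True
        then obtain \<alpha> \<beta> \<gamma> where ze: "z = comb P U W \<alpha> \<beta> \<gamma>" unfolding span3_def comb_def by blast
        define z' where "z' = comb P U W 0 \<beta> \<gamma>"
        have z'e: "z' = (\<lambda>n. 1 * z n + (- \<alpha>) * P n)"
          unfolding z'_def ze comb_def by (simp add: algebra_simps)
        have PzS: "P \<in> span2 P z" "z \<in> span2 P z"
          using span2_mem[of 1 P 0 z] span2_mem[of 0 P 1 z] by simp_all
        have z'S: "z' \<in> span2 P z" unfolding z'e by (rule span2_comb[OF PzS(2) PzS(1)])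
        have iPz': "ind2 P z'" unfolding ind2_def
        proof (intro allI impI)
          fix s t assume h: "\<forall>n. s * P n + t * z' n = 0"
          have "(\<lambda>n. s * comb P U W 1 0 0 n + t * comb P U W 0 \<beta> \<gamma> n) = zero4"
            using h unfolding zero4_def z'_def[symmetric] Pc[symmetric] by auto
          then have hz: "s = 0" "t * \<beta> = 0" "t * \<gamma> = 0" unfolding clin cz by auto
          have "t = 0"
          proof (rule ccontr)
            assume "t \<noteq> 0"
            then have "\<beta> = 0" "\<gamma> = 0" using hz by auto
            then have "\<And>n. \<alpha> * P n + (- 1) * z n = 0" unfolding ze comb_def by simp
            then have "\<alpha> = 0 \<and> (- 1 :: complex) = 0" by (rule ind2D[OF zz(2)])
            then show False by simp
          qed
          then show "s = 0 \<and> t = 0" using hz by simp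
        qed
        have N'z': "N' = span2 P z'" using exchange[OF zz(2) PzS(1) z'S iPz'] N'z by simp
        have z'N': "z' \<in> N'" using N'z' span2_mem[of 0 P 1 z'] by simp
        have \<beta>: "\<beta> \<noteq> 0"
        proof
          assume "\<beta> = 0"
          then have "z' \<in> M" using inM z'_def by simp
          then have "span2 P z' = M" using exchange[OF indPW _ _ iPz'] PM Me' by simp
          then show False using N'z' N'M by simp
        qed
        have \<gamma>: "\<gamma> \<noteq> 0"
        proof
          assume "\<gamma> = 0"
          then have "z' \<in> L" using inL z'_def by simp
          then have "span2 P z' = L" using exchange[OF indPU _ _ iPz'] PL Le' by simp
          then show False using N'z' N'L by simp
        qed
        have r0: "l * 0 + m1 * \<beta> + m2 * \<gamma> = 0" using onN'[OF z'N'] unfolding z'_def surf using \<beta> \<gamma> by simp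
        have "(\<lambda>n. 1 * P n + 1 * z' n) \<in> N'" using span2_comb[OF PzS(1) z'S, of 1 1] N'z by simp
        moreover have "(\<lambda>n. 1 * P n + 1 * z' n) = comb P U W (1*1+1*0) (1*0+1*\<beta>) (1*0+1*\<gamma>)"
          unfolding z'_def comb_def by (simp add: algebra_simps)
        ultimately have r1: "l * 1 + m1 * \<beta> + m2 * \<gamma> = 0" using onN' surf \<beta> \<gamma> by fastforce
        have l0: "l = 0" using r0 r1 by algebra
        have PN: "P \<in> N" using inN[of 1 0 0] Pc l0 by simp
        have z'N: "z' \<in> N" using inN z'_def r0 by simp
        have "span2 P z' = N" using exchange[OF nn(3) _ _ iPz'] PN z'N Ne' by simp
        then show ?thesis using N'z' by simp
      next
        case False
        have span: "\<forall>y. pt4 y \<longrightarrow> (\<exists>a b c d. \<forall>n. y n = a * P n + b * U n + c * W n + d * z n)"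
          by (rule span_of_notin[OF i3' pts zz(3) False])
        have FP: "cubic_eval c P = 0" by (rule surface_pts[OF Lr PL])
        have d1: "Dv c P P = 0" "Dv c U P = 0" "Dv c W P = 0"
          using Dv3[OF ok', of 1 0 0] by simp_all
        have "\<And>s t. cubic_eval c (\<lambda>n. s * P n + t * z n) = 0"
          by (rule onN') (unfold N'z, rule span2_mem)
        then have "T3 c P P z + T3 c P z P + T3 c z P P = 0" by (rule line_on_surface(2))
        then have d2: "Dv c z P = 0" unfolding Dv_T by (simp add: algebra_simps)
        show ?thesis using singular_contra[OF sm pts(1) Pnz FP span d1 d2] by simp
      qed
    qed
  qed
  show ?thesis using NR NL NM cover uniq by blast
qed

definition tri :: "'a set \<Rightarrow> ('a \<Rightarrow> 'a \<Rightarrow> bool) \<Rightarrow> 'a \<Rightarrow> 'a \<Rightarrow> 'a \<Rightarrow> bool" where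
  "tri R mt a b c \<longleftrightarrow> a \<in> R \<and> b \<in> R \<and> c \<in> R \<and> a \<noteq> b \<and> a \<noteq> c \<and> b \<noteq> c \<and> mt a b \<and> mt a c \<and> mt b c
     \<and> (\<forall>w\<in>R. mt w a \<or> mt w b \<or> mt w c)
     \<and> (\<forall>w\<in>R. w \<noteq> a \<longrightarrow> w \<noteq> b \<longrightarrow> w \<noteq> c \<longrightarrow> \<not> (mt w a \<and> mt w b) \<and> \<not> (mt w a \<and> mt w c) \<and> \<not> (mt w b \<and> mt w c))"

context
  fixes R :: "'a set" and mt :: "'a \<Rightarrow> 'a \<Rightarrow> bool"
  assumes sym: "\<And>a b. mt a b \<longleftrightarrow> mt b a"
    and H1: "\<And>a b c. a \<in> R \<Longrightarrow> b \<in> R \<Longrightarrow> c \<in> R \<Longrightarrow> mt a b \<or> mt a c \<or> mt b c"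
    and H2: "\<And>x y. x \<in> R \<Longrightarrow> y \<in> R \<Longrightarrow> x \<noteq> y \<Longrightarrow> mt x y \<Longrightarrow> \<exists>z\<in>R. z \<noteq> x \<and> z \<noteq> y \<and> mt z x \<and> mt z y
        \<and> (\<forall>w\<in>R. mt w x \<or> mt w y \<or> mt w z) \<and> (\<forall>w\<in>R. w \<noteq> x \<longrightarrow> w \<noteq> y \<longrightarrow> mt w x \<longrightarrow> mt w y \<longrightarrow> w = z)"
begin

lemma tri_perm:
  assumes "tri R mt a b c"
  shows "tri R mt b a c" "tri R mt a c b" "tri R mt c b a" "tri R mt b c a" "tri R mt c a b"
  using assms unfolding tri_def by (auto simp: sym)

lemma uniq_pair:
  assumes x: "x \<in> R" and z: "z \<in> R" and xz: "x \<noteq> z" and mxz: "mt x z"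
    and y: "y \<in> R" "y \<noteq> x" "y \<noteq> z" "mt y x" "mt y z"
    and w: "w \<in> R" "w \<noteq> x" "w \<noteq> z" "mt w x" "mt w z"
  shows "w = y"
proof -
  obtain z2 where z2: "z2 \<in> R" "\<forall>v\<in>R. v \<noteq> x \<longrightarrow> v \<noteq> z \<longrightarrow> mt v x \<longrightarrow> mt v z \<longrightarrow> v = z2"
    using H2[OF x z xz mxz] by blast
  have "y = z2" using z2(2) y by blast
  moreover have "w = z2" using z2(2) w by blast
  ultimately show ?thesis by simp
qed

lemma tri_exists:
  assumes x: "x \<in> R" and y: "y \<in> R" and xy: "x \<noteq> y" and m: "mt x y"
  shows "\<exists>z. tri R mt x y z"
proof -
  obtain z where zf: "z \<in> R" "z \<noteq> x" "z \<noteq> y" "mt z x" "mt z y"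
    and cov: "\<forall>w\<in>R. mt w x \<or> mt w y \<or> mt w z"
    and un: "\<forall>w\<in>R. w \<noteq> x \<longrightarrow> w \<noteq> y \<longrightarrow> mt w x \<longrightarrow> mt w y \<longrightarrow> w = z"
    using H2[OF x y xy m] by blast
  have "\<forall>w\<in>R. w \<noteq> x \<longrightarrow> w \<noteq> y \<longrightarrow> w \<noteq> z \<longrightarrow> \<not> (mt w x \<and> mt w y) \<and> \<not> (mt w x \<and> mt w z) \<and> \<not> (mt w y \<and> mt w z)"
  proof (intro ballI impI conjI notI)
    fix w assume w: "w \<in> R" "w \<noteq> x" "w \<noteq> y" "w \<noteq> z"
    { assume "mt w x \<and> mt w y" then show False using un w by blast }
    { assume h: "mt w x \<and> mt w z"
      have "w = y" by (rule uniq_pair[OF x zf(1) _ _ y]) (use zf w h m xy sym in auto)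
      then show False using w by simp }
    { assume h: "mt w y \<and> mt w z"
      have "w = x" by (rule uniq_pair[OF y zf(1) _ _ x]) (use zf w h m xy sym in auto)
      then show False using w by simp }
  qed
  then have "tri R mt x y z" unfolding tri_def using x y zf xy m cov by (auto simp: sym)
  then show ?thesis by blast
qed

lemma tri_atmost:
  assumes "tri R mt a b c" "w \<in> R" "w \<noteq> a" "w \<noteq> b" "w \<noteq> c"
  shows "\<not> (mt w a \<and> mt w b)" "\<not> (mt w a \<and> mt w c)" "\<not> (mt w b \<and> mt w c)"
  using assms unfolding tri_def by blast+

lemma tri_cover: "tri R mt a b c \<Longrightarrow> w \<in> R \<Longrightarrow> mt w a \<or> mt w b \<or> mt w c"
  unfolding tri_def by blast

lemma tri_basic: "tri R mt a b c \<Longrightarrow> a \<in> R \<and> b \<in> R \<and> c \<in> R \<and> a \<noteq> b \<and> a \<noteq> c \<and> b \<noteq> c \<and> mt a b \<and> mt a c \<and> mt b c"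
  unfolding tri_def by blast

lemma case_in:
  assumes T: "tri R mt x y z" and T': "tri R mt ka kb x"
    and RU: "R = {x, y, z, ka, kb, kc}" and dist: "distinct [x, y, z, ka, kb, kc]"
  shows False
proof -
  have inR: "x \<in> R" "y \<in> R" "z \<in> R" "ka \<in> R" "kb \<in> R" "kc \<in> R" using RU by auto
  have kc_ka: "\<not> mt kc ka"
  proof
    assume m: "mt kc ka"
    obtain Z where Z: "tri R mt ka kc Z" using tri_exists[OF inR(4) inR(6) _ ] m dist sym by auto
    have Zb: "Z \<in> R" "Z \<noteq> ka" "Z \<noteq> kc" "mt ka Z" "mt kc Z" using tri_basic[OF Z] by auto
    have "Z = x \<or> Z = y \<or> Z = z \<or> Z = kb" using Zb RU by auto
    then show False
    proof (elim disjE)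
      assume "Z = x"
      then have "mt kc x" using Zb by simp
      then have "\<not> (mt kc ka \<and> mt kc x)" using tri_atmost(2)[OF T' inR(6)] dist by auto
      then show False using m \<open>mt kc x\<close> by simp
    next
      assume "Z = y"
      then have "mt ka y" using Zb by simp
      moreover have "mt ka x" using tri_basic[OF T'] by (simp add: sym)
      ultimately show False using tri_atmost(1)[OF T inR(4)] dist by auto
    next
      assume "Z = z"
      then have "mt ka z" using Zb by simp
      moreover have "mt ka x" using tri_basic[OF T'] by (simp add: sym)
      ultimately show False using tri_atmost(2)[OF T inR(4)] dist by auto
    next
      assume "Z = kb"
      then have "mt kc kb" using Zb by simp
      then show False using tri_atmost(1)[OF T' inR(6)] dist m by auto
    qed
  qed
  have kc_kb: "\<not> mt kc kb"
  proof
    assume m: "mt kc kb"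
    obtain Z where Z: "tri R mt kb kc Z" using tri_exists[OF inR(5) inR(6) _ ] m dist sym by auto
    have Zb: "Z \<in> R" "Z \<noteq> kb" "Z \<noteq> kc" "mt kb Z" "mt kc Z" using tri_basic[OF Z] by auto
    have "Z = x \<or> Z = y \<or> Z = z \<or> Z = ka" using Zb RU by auto
    then show False
    proof (elim disjE)
      assume "Z = x"
      then have "mt kc x" using Zb by simp
      then show False using tri_atmost(3)[OF T' inR(6)] dist m by auto
    next
      assume "Z = y"
      then have "mt kb y" using Zb by simp
      moreover have "mt kb x" using tri_basic[OF T'] by (simp add: sym)
      ultimately show False using tri_atmost(1)[OF T inR(5)] dist by auto
    next
      assume "Z = z"
      then have "mt kb z" using Zb by simp
      moreover have "mt kb x" using tri_basic[OF T'] by (simp add: sym)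
      ultimately show False using tri_atmost(2)[OF T inR(5)] dist by auto
    next
      assume "Z = ka"
      then have "mt kc ka" using Zb by (simp add: sym)
      then show False using kc_ka by simp
    qed
  qed
  have kc_x: "mt kc x" using tri_cover[OF T' inR(6)] kc_ka kc_kb by auto
  have kc_y: "\<not> mt kc y" using tri_atmost(1)[OF T inR(6)] kc_x dist by auto
  have ka_y: "\<not> mt ka y"
  proof -
    have "mt ka x" using tri_basic[OF T'] by (simp add: sym)
    then show ?thesis using tri_atmost(1)[OF T inR(4)] dist by auto
  qed
  have "mt y ka \<or> mt y kc \<or> mt ka kc" using H1[OF inR(2) inR(4) inR(6)] .
  then show False using kc_y ka_y kc_ka by (auto simp: sym)
qed

lemma case_out:
  assumes T: "tri R mt x y z" and T': "tri R mt ka kb kc"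
    and RU: "R = {x, y, z, ka, kb, kc}" and dist: "distinct [x, y, z, ka, kb, kc]"
  shows False
proof -
  have inR: "x \<in> R" "y \<in> R" "z \<in> R" "ka \<in> R" "kb \<in> R" "kc \<in> R" using RU by auto
  have gen: False if Ti: "tri R mt ka kb kc" and m: "mt x ka"
    and RUi: "R = {x, y, z, ka, kb, kc}" and di: "distinct [x, y, z, ka, kb, kc]" for ka kb kc
  proof -
    have inRi: "ka \<in> R" "kb \<in> R" "kc \<in> R" using RUi by auto
    obtain Z where Z: "tri R mt x ka Z" using tri_exists[OF inR(1) inRi(1) _ m] di by auto
    have Zb: "Z \<in> R" "Z \<noteq> x" "Z \<noteq> ka" "mt x Z" "mt ka Z" using tri_basic[OF Z] by auto
    have "Z = y \<or> Z = z \<or> Z = kb \<or> Z = kc" using Zb RUi by auto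
    then show False
    proof (elim disjE)
      assume "Z = y"
      then show False using tri_atmost(1)[OF T inRi(1)] Zb m di by (auto simp: sym)
    next
      assume "Z = z"
      then show False using tri_atmost(2)[OF T inRi(1)] Zb m di by (auto simp: sym)
    next
      assume "Z = kb"
      then show False using tri_atmost(1)[OF Ti inR(1)] Zb m di by (auto simp: sym)
    next
      assume "Z = kc"
      then show False using tri_atmost(2)[OF Ti inR(1)] Zb m di by (auto simp: sym)
    qed
  qed
  have "mt x ka \<or> mt x kb \<or> mt x kc" using tri_cover[OF T' inR(1)] .
  then show False
  proof (elim disjE)
    assume m: "mt x ka" show False by (rule gen[OF T' m RU dist])
  next
    assume m: "mt x kb"
    have r: "R = {x, y, z, kb, ka, kc}" using RU by auto
    have d: "distinct [x, y, z, kb, ka, kc]" using dist by auto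
    show False by (rule gen[OF tri_perm(1)[OF T'] m r d])
  next
    assume m: "mt x kc"
    have r: "R = {x, y, z, kc, kb, ka}" using RU by auto
    have d: "distinct [x, y, z, kc, kb, ka]" using dist by auto
    show False by (rule gen[OF tri_perm(3)[OF T'] m r d])
  qed
qed

lemma pair_contra:
  assumes T: "tri R mt x y z" and RU: "R = {x, y, z, ka, kb, kc}" and dist: "distinct [x, y, z, ka, kb, kc]"
    and m: "mt ka kb"
  shows False
proof -
  have inR: "ka \<in> R" "kb \<in> R" using RU by auto
  obtain z' where T': "tri R mt ka kb z'" using tri_exists[OF inR _ m] dist by auto
  have "z' \<in> R" "z' \<noteq> ka" "z' \<noteq> kb" using tri_basic[OF T'] by auto
  then have "z' = x \<or> z' = y \<or> z' = z \<or> z' = kc" using RU by auto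
  then show False
  proof (elim disjE)
    assume e: "z' = x"
    have T'': "tri R mt ka kb x" using T' e by simp
    show False by (rule case_in[OF T T'' RU dist])
  next
    assume e: "z' = y"
    have T'': "tri R mt ka kb y" using T' e by simp
    have r: "R = {y, x, z, ka, kb, kc}" using RU by auto
    have d: "distinct [y, x, z, ka, kb, kc]" using dist by auto
    show False by (rule case_in[OF tri_perm(1)[OF T] T'' r d])
  next
    assume e: "z' = z"
    have T'': "tri R mt ka kb z" using T' e by simp
    have r: "R = {z, y, x, ka, kb, kc}" using RU by auto
    have d: "distinct [z, y, x, ka, kb, kc]" using dist by auto
    show False by (rule case_in[OF tri_perm(3)[OF T] T'' r d])
  next
    assume e: "z' = kc"
    have T'': "tri R mt ka kb kc" using T' e by simp
    show False by (rule case_out[OF T T'' RU dist])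
  qed
qed

lemma not_six: "card R \<noteq> 6"
proof
  assume c6: "card R = 6"
  then have fin: "finite R" using card.infinite by fastforce
  obtain a b c where abc: "a \<in> R" "b \<in> R" "c \<in> R" "distinct [a, b, c]"
  proof -
    obtain A where "A \<subseteq> R" "card A = 3" using c6 by (metis obtain_subset_with_card_n le_add2 numeral_le_iff semiring_norm(69) numeral_Bit0 numeral_eq_Suc)
    then show ?thesis using that by (auto simp: card_3_iff)
  qed
  obtain x y where xy: "x \<in> R" "y \<in> R" "x \<noteq> y" "mt x y"
    using H1[OF abc(1-3)] abc by auto
  obtain z where T: "tri R mt x y z" using tri_exists[OF xy] by blast
  have T3: "x \<in> R" "y \<in> R" "z \<in> R" "distinct [x, y, z]" using tri_basic[OF T] by auto
  have "card (R - {x, y, z}) = 3" using c6 T3 fin by (simp add: card_Diff_subset)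
  then obtain ka kb kc where k: "R - {x, y, z} = {ka, kb, kc}" "distinct [ka, kb, kc]"
    by (auto simp: card_3_iff)
  have RU: "R = {x, y, z, ka, kb, kc}" using k(1) T3 by auto
  have dist: "distinct [x, y, z, ka, kb, kc]" using k T3 by auto
  have inR: "ka \<in> R" "kb \<in> R" "kc \<in> R" using RU by auto
  have "mt ka kb \<or> mt ka kc \<or> mt kb kc" using H1[OF inR] .
  then show False
  proof (elim disjE)
    assume m: "mt ka kb" show False by (rule pair_contra[OF T RU dist m])
  next
    assume m: "mt ka kc"
    have r: "R = {x, y, z, ka, kc, kb}" using RU by auto
    have d: "distinct [x, y, z, ka, kc, kb]" using dist by auto
    show False by (rule pair_contra[OF T r d m])
  next
    assume m: "mt kb kc"
    have r: "R = {x, y, z, kb, kc, ka}" using RU by auto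
    have d: "distinct [x, y, z, kb, kc, ka]" using dist by auto
    show False by (rule pair_contra[OF T r d m])
  qed
qed

end

lemma zero_in_rat_line: "L \<in> rat_lines_on c \<Longrightarrow> zero4 \<in> L"
  unfolding rat_lines_on_def rat_line_def line_of_def zero4_def pt4_def by auto

lemma disj_of_not_meet: "A \<in> rat_lines_on c \<Longrightarrow> B \<in> rat_lines_on c \<Longrightarrow> \<not> meet A B \<Longrightarrow> lines_disjoint A B"
  unfolding lines_disjoint_def meet_def using zero_in_rat_line by blast

theorem corollary4p13:
  fixes c :: "nat \<Rightarrow> nat \<Rightarrow> nat \<Rightarrow> rat"
  assumes "smooth_cubic c"
    and "\<not> (\<exists>L1 L2 L3. L1 \<in> rat_lines_on c \<and> L2 \<in> rat_lines_on c \<and> L3 \<in> rat_lines_on c \<and>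
              lines_disjoint L1 L2 \<and> lines_disjoint L1 L3 \<and> lines_disjoint L2 L3)"
  shows "card (rat_lines_on c) \<noteq> 6"
proof (rule not_six[of meet "rat_lines_on c"])
  show "\<And>a b. meet a b = meet b a" unfolding meet_def by blast
  show "\<And>a b d. a \<in> rat_lines_on c \<Longrightarrow> b \<in> rat_lines_on c \<Longrightarrow> d \<in> rat_lines_on c \<Longrightarrow> meet a b \<or> meet a d \<or> meet b d"
  proof (rule ccontr)
    fix a b d assume h: "a \<in> rat_lines_on c" "b \<in> rat_lines_on c" "d \<in> rat_lines_on c"
      and n: "\<not> (meet a b \<or> meet a d \<or> meet b d)"
    have "lines_disjoint a b" "lines_disjoint a d" "lines_disjoint b d"
      using disj_of_not_meet h n by blast+
    then show False using assms(2) h by blast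
  qed
  show "\<And>x y. x \<in> rat_lines_on c \<Longrightarrow> y \<in> rat_lines_on c \<Longrightarrow> x \<noteq> y \<Longrightarrow> meet x y \<Longrightarrow>
      \<exists>z\<in>rat_lines_on c. z \<noteq> x \<and> z \<noteq> y \<and> meet z x \<and> meet z y \<and>
        (\<forall>w\<in>rat_lines_on c. meet w x \<or> meet w y \<or> meet w z) \<and>
        (\<forall>w\<in>rat_lines_on c. w \<noteq> x \<longrightarrow> w \<noteq> y \<longrightarrow> meet w x \<longrightarrow> meet w y \<longrightarrow> w = z)"
    using third_line[OF assms(1)] by blast
qed


end
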